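(* Consider a sequence of problems indexed by $n$, with $p=p_n$ and a distribution of $(X,Y)$ possibly depending on $n$. For each $n$, let $(X_1,Y_1),\dots,(X_n,Y_n)$ be i.i.d. copies of $(X,Y)$, $X\in\mathbb{R}^p$, $Y\in\mathbb{R}$, with $E(X)=0$, $\mathrm{Var}(X)=\mathbf{I}$, $E(Y^2)<\infty$. Let $\beta=E(XY)$, $W=XY$, $W_i=X_iY_i$, $\mathbf{A}=E(WW^T)$, and $\hat\tau^2=\binom{n}{2}^{-1}\sum_{i_1<i_2}W_{i_1}^TW_{i_2}$. For $S\subseteq\{1,\dots,p\}$ let $h_S(x)=\sum_{j<j',\,j,j'\in S}x_jx_{j'}$. Let $\delta$ be a covariate selection procedure producing a (data-dependent) set $\mathbf{S}_\delta\subseteq\{1,\dots,p\}$, and write $h=h_{\mathbf{S}_\delta}$. Define $Z_h=\frac1n\sum_{i=1}^nh(X_i)$, $$\hat c_h^*=\frac{\binom{n}{2}^{-1}\sum_{i_1\ne i_2}W_{i_1}^TW_{i_2}h(X_{i_2})}{\mathrm{Var}[h(X)]},\qquad c_h^*=\frac{2\beta^T\theta_h}{\mathrm{Var}[h(X)]},\quad \theta_h=E[Wh(X)],$$ (where $\mathrm{Var}[h_S(X)]$ and $\theta_S=E[W h_S(X)]$ are computed for a fixed set $S$ and then evaluated at $S=\mathbf{S}_\delta$), and $T_{\hat h}=\hat\tau^2-\hat c_h^*Z_h$, $T_h=\hat\tau^2-c_h^*Z_h$. Assume $\delta$ is stable, i.e. there is a deterministic sequence $\Theta=\Theta_n\subseteq\{1,\dots,p\}$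 with $\lim_{n\to\infty}n[P(\mathbf{S}_\delta\ne\Theta)]^{1/2}=0$. Let $f=h_\Theta$, $\theta_f=E[Wf(X)]$, $c_f^*=2\beta^T\theta_f/\mathrm{Var}[f(X)]$, $\hat c_f^*=\frac{\frac{2}{n(n-1)}\sum_{i_1\ne i_2}W_{i_1}^TW_{i_2}f(X_{i_2})}{\mathrm{Var}[f(X)]}$, $Z_f=\frac1n\sum_{i=1}^nf(X_i)$, $T_f=\hat\tau^2-c_f^*Z_f$, $T_{\hat f}=\hat\tau^2-\hat c_f^*Z_f$, $b=Wf(X)$, $\mathbf{B}=E[WW^Tf(X)]$, $\mathbf{C}=E[WW^Tf^2(X)]$. Assume that $n/p$, $\|\beta\|^2$, $\|\theta_f\|^2/\mathrm{Var}[f(X)]$ and $E(\|b\|^2)/(n\mathrm{Var}[f(X)])$ are bounded; that $\|\mathbf{A}\|_F^2/n^2\to0$, $\|\mathbf{B}\|_F^2/(n^2\mathrm{Var}[f(X)])\to0$ and $\|\mathbf{C}\|_F^2/\{n\mathrm{Var}[f(X)]\}^2\to0$; and that the first four moments of $T_h,T_{\hat h},T_f,T_{\hat f}$ are bounded. Then $$\sqrt n\,(T_{\hat h}-T_h)\to0\ \text{in probability}.$$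
   Context: $\|\cdot\|_F$ is the Frobenius norm. Under $E(X)=0$, $\mathrm{Var}(X)=\mathbf I$, $\beta$ is the slope of the best linear predictor of $Y$ given $X$, $\hat\tau^2$ is an unbiased "naive" estimator of $\tau^2=\|\beta\|^2$, and $Z_h$, $Z_f$ are zero-mean statistics (zero-estimators) since the distribution of $X$ is known; $T_{\hat h}$ is the improved estimator and $T_h$ its oracle version with the optimal coefficient. Variances $\mathrm{Var}[f(X)]$, $\mathrm{Var}[h(X)]$ are assumed nonzero. *)

theory Defs
  imports "HOL-Probability.Probability"
begin

text \<open>An observation is a pair (x, y) with x :: nat => real (coordinates 1..p are used)
  and y :: real.\<close>

definition obsM :: "((nat \<Rightarrow> real) \<times> real) measure" where
  "obsM = (PiM UNIV (\<lambda>_::nat. (borel :: real measure))) \<Otimes>\<^sub>M (borel :: real measure)"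

definition hS :: "nat set \<Rightarrow> (nat \<Rightarrow> real) \<Rightarrow> real" where
  "hS S x = (\<Sum>(j, j') \<in> {(j, j'). j \<in> S \<and> j' \<in> S \<and> j < j'}. x j * x j')"

definition popvar :: "((nat \<Rightarrow> real) \<times> real) measure \<Rightarrow> ((nat \<Rightarrow> real) \<times> real \<Rightarrow> real) \<Rightarrow> real" where
  "popvar D g = (\<integral>z. (g z - (\<integral>z. g z \<partial>D))\<^sup>2 \<partial>D)"

definition beta :: "((nat \<Rightarrow> real) \<times> real) measure \<Rightarrow> nat \<Rightarrow> real" where
  "beta D j = (\<integral>z. fst z j * snd z \<partial>D)"

definition theta :: "((nat \<Rightarrow> real) \<times> real) measure \<Rightarrow> nat set \<Rightarrow> nat \<Rightarrow> real" where
  "theta D S j = (\<integral>z. fst z j * snd z * hS S (fst z) \<partial>D)"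

text \<open>Sample quantities; samples are obs 0, ..., obs (n-1); W_i = X_i Y_i.\<close>
definition Wdot :: "nat \<Rightarrow> (nat \<Rightarrow> (nat \<Rightarrow> real) \<times> real) \<Rightarrow> nat \<Rightarrow> nat \<Rightarrow> real" where
  "Wdot p obs i1 i2 = (\<Sum>j\<in>{1..p}. (fst (obs i1) j * snd (obs i1)) * (fst (obs i2) j * snd (obs i2)))"

definition tauhat :: "nat \<Rightarrow> nat \<Rightarrow> (nat \<Rightarrow> (nat \<Rightarrow> real) \<times> real) \<Rightarrow> real" where
  "tauhat p n obs = (1 / real (n choose 2)) *
     (\<Sum>i1<n. \<Sum>i2<n. if i1 < i2 then Wdot p obs i1 i2 else 0)"

definition Zbar :: "nat \<Rightarrow> ((nat \<Rightarrow> real) \<Rightarrow> real) \<Rightarrow> (nat \<Rightarrow> (nat \<Rightarrow> real) \<times> real) \<Rightarrow> real" where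
  "Zbar n g obs = (1 / real n) * (\<Sum>i<n. g (fst (obs i)))"

definition chat :: "((nat \<Rightarrow> real) \<times> real) measure \<Rightarrow> nat \<Rightarrow> nat \<Rightarrow> nat set \<Rightarrow>
    (nat \<Rightarrow> (nat \<Rightarrow> real) \<times> real) \<Rightarrow> real" where
  "chat D p n S obs =
     ((1 / real (n choose 2)) *
       (\<Sum>i1<n. \<Sum>i2<n. if i1 \<noteq> i2 then Wdot p obs i1 i2 * hS S (fst (obs i2)) else 0))
     / popvar D (\<lambda>z. hS S (fst z))"

definition cstar :: "((nat \<Rightarrow> real) \<times> real) measure \<Rightarrow> nat \<Rightarrow> nat set \<Rightarrow> real" where
  "cstar D p S = 2 * (\<Sum>j\<in>{1..p}. beta D j * theta D S j) / popvar D (\<lambda>z. hS S (fst z))"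

definition Thatstat :: "((nat \<Rightarrow> real) \<times> real) measure \<Rightarrow> nat \<Rightarrow> nat \<Rightarrow> nat set \<Rightarrow>
    (nat \<Rightarrow> (nat \<Rightarrow> real) \<times> real) \<Rightarrow> real" where
  "Thatstat D p n S obs = tauhat p n obs - chat D p n S obs * Zbar n (hS S) obs"

definition Tstat :: "((nat \<Rightarrow> real) \<times> real) measure \<Rightarrow> nat \<Rightarrow> nat \<Rightarrow> nat set \<Rightarrow>
    (nat \<Rightarrow> (nat \<Rightarrow> real) \<times> real) \<Rightarrow> real" where
  "Tstat D p n S obs = tauhat p n obs - cstar D p S * Zbar n (hS S) obs"

definition bounded_moments4 :: "(nat \<Rightarrow> 'a measure) \<Rightarrow> (nat \<Rightarrow> 'a \<Rightarrow> real) \<Rightarrow> bool" where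
  "bounded_moments4 M T \<longleftrightarrow>
     (\<forall>n. \<forall>k\<in>{1..4::nat}. integrable (M n) (\<lambda>\<omega>. T n \<omega> ^ k)) \<and>
     (\<forall>k\<in>{1..4::nat}. Bseq (\<lambda>n. \<integral>\<omega>. T n \<omega> ^ k \<partial>M n))"

end

theory Submission
  imports Defs
begin

lemma meas_fst_obs[measurable]: "(\<lambda>z. fst z j) \<in> borel_measurable obsM"
  unfolding obsM_def by measurable

lemma meas_snd_obs[measurable]: "(\<lambda>z. snd z) \<in> borel_measurable obsM"
  unfolding obsM_def by measurable

lemma meas_hS[measurable]: "(\<lambda>z. hS S (fst z)) \<in> borel_measurable obsM"
  unfolding hS_def by (intro borel_measurable_sum) (auto simp: case_prod_beta)

lemma L2_prod_int:
  fixes f g :: "'b \<Rightarrow> real"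
  assumes "f \<in> borel_measurable M" "g \<in> borel_measurable M"
    "integrable M (\<lambda>x. (f x)\<^sup>2)" "integrable M (\<lambda>x. (g x)\<^sup>2)"
  shows "integrable M (\<lambda>x. f x * g x)"
proof (rule Bochner_Integration.integrable_bound[of M "\<lambda>x. (f x)\<^sup>2 + (g x)\<^sup>2"])
  show "integrable M (\<lambda>x. (f x)\<^sup>2 + (g x)\<^sup>2)" using assms by auto
  show "(\<lambda>x. f x * g x) \<in> borel_measurable M" using assms by measurable
  have "\<And>a b::real. \<bar>a * b\<bar> \<le> \<bar>a\<^sup>2 + b\<^sup>2\<bar>"
  proof -
    fix a b :: real
    have "2 * a * b \<le> a\<^sup>2 + b\<^sup>2" "2 * (-a) * b \<le> (-a)\<^sup>2 + b\<^sup>2" by (rule sum_squares_bound)+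
    moreover have "0 \<le> a\<^sup>2 + b\<^sup>2" by simp
    ultimately show "\<bar>a * b\<bar> \<le> \<bar>a\<^sup>2 + b\<^sup>2\<bar>" by (simp add: abs_if)
  qed
  then show "AE x in M. norm (f x * g x) \<le> norm ((f x)\<^sup>2 + (g x)\<^sup>2)" by simp
qed

locale iid_setup = prob_space M for M :: "'a measure" +
  fixes D :: "((nat \<Rightarrow> real) \<times> real) measure"
    and X :: "nat \<Rightarrow> 'a \<Rightarrow> (nat \<Rightarrow> real) \<times> real" and n :: nat
  assumes D_sets: "sets D = sets obsM"
    and X_meas: "\<And>i. i < n \<Longrightarrow> X i \<in> measurable M obsM"
    and X_indep: "indep_vars (\<lambda>_. obsM) X {..<n}"
    and X_distr: "\<And>i. i < n \<Longrightarrow> distr M obsM (X i) = D"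
    and D_prob: "prob_space D"
begin

lemma measD:
  fixes g :: "(nat \<Rightarrow> real) \<times> real \<Rightarrow> real"
  shows "g \<in> borel_measurable obsM \<Longrightarrow> g \<in> borel_measurable D"
  by (metis measurable_cong_sets[OF D_sets refl])

lemma L2_int_D:
  fixes g :: "(nat \<Rightarrow> real) \<times> real \<Rightarrow> real"
  assumes "g \<in> borel_measurable obsM" "integrable D (\<lambda>z. (g z)\<^sup>2)"
  shows "integrable D g"
proof -
  interpret Dp: prob_space D by (rule D_prob)
  show ?thesis using Dp.square_integrable_imp_integrable[OF measD[OF assms(1)] assms(2)] .
qed

lemma L2_prod_D:
  fixes g h :: "(nat \<Rightarrow> real) \<times> real \<Rightarrow> real"
  assumes "g \<in> borel_measurable obsM" "h \<in> borel_measurable obsM"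
   "integrable D (\<lambda>z. (g z)\<^sup>2)" "integrable D (\<lambda>z. (h z)\<^sup>2)"
  shows "integrable D (\<lambda>z. g z * h z)"
  using L2_prod_int[OF measD[OF assms(1)] measD[OF assms(2)] assms(3,4)] .


lemma int_single:
  fixes g :: "(nat \<Rightarrow> real) \<times> real \<Rightarrow> real"
  assumes g: "g \<in> borel_measurable obsM" and i: "i < n"
  shows "integrable M (\<lambda>\<omega>. g (X i \<omega>)) \<longleftrightarrow> integrable D g"
    and "(\<integral>\<omega>. g (X i \<omega>) \<partial>M) = integral\<^sup>L D g"
proof -
  have D: "D = distr M obsM (X i)" using X_distr[OF i] by simp
  show "integrable M (\<lambda>\<omega>. g (X i \<omega>)) \<longleftrightarrow> integrable D g"
    unfolding D by (rule integrable_distr_eq[OF X_meas[OF i] g, symmetric])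
  show "(\<integral>\<omega>. g (X i \<omega>) \<partial>M) = integral\<^sup>L D g"
    unfolding D by (rule integral_distr[OF X_meas[OF i] g, symmetric])
qed

lemma meas_single:
  fixes g :: "(nat \<Rightarrow> real) \<times> real \<Rightarrow> real"
  assumes g: "g \<in> borel_measurable obsM" and i: "i < n"
  shows "(\<lambda>\<omega>. g (X i \<omega>)) \<in> borel_measurable M"
  using measurable_compose[OF X_meas[OF i] g] by (simp add: comp_def)

lemma block:
  fixes G H :: "(nat \<Rightarrow> (nat \<Rightarrow> real) \<times> real) \<Rightarrow> real"
  assumes AB: "A \<inter> B = {}" "A \<subseteq> {..<n}" "B \<subseteq> {..<n}"
    and G: "G \<in> borel_measurable (PiM A (\<lambda>_. obsM))"
    and H: "H \<in> borel_measurable (PiM B (\<lambda>_. obsM))"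
    and iG: "integrable M (\<lambda>\<omega>. G (restrict (\<lambda>i. X i \<omega>) A))"
    and iH: "integrable M (\<lambda>\<omega>. H (restrict (\<lambda>i. X i \<omega>) B))"
  shows "integrable M (\<lambda>\<omega>. G (restrict (\<lambda>i. X i \<omega>) A) * H (restrict (\<lambda>i. X i \<omega>) B))"
    and "(\<integral>\<omega>. G (restrict (\<lambda>i. X i \<omega>) A) * H (restrict (\<lambda>i. X i \<omega>) B) \<partial>M)
         = (\<integral>\<omega>. G (restrict (\<lambda>i. X i \<omega>) A) \<partial>M) * (\<integral>\<omega>. H (restrict (\<lambda>i. X i \<omega>) B) \<partial>M)"
proof -
  have ind: "indep_var borel (G \<circ> (\<lambda>\<omega>. restrict (\<lambda>i. X i \<omega>) A)) borel (H \<circ> (\<lambda>\<omega>. restrict (\<lambda>i. X i \<omega>) B))"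
    by (rule indep_var_compose[OF indep_var_restrict[OF X_indep AB] G H])
  then have ind': "indep_var borel (\<lambda>\<omega>. G (restrict (\<lambda>i. X i \<omega>) A)) borel (\<lambda>\<omega>. H (restrict (\<lambda>i. X i \<omega>) B))"
    by (simp add: comp_def)
  show "integrable M (\<lambda>\<omega>. G (restrict (\<lambda>i. X i \<omega>) A) * H (restrict (\<lambda>i. X i \<omega>) B))"
    by (rule indep_var_integrable[OF ind' iG iH])
  show "(\<integral>\<omega>. G (restrict (\<lambda>i. X i \<omega>) A) * H (restrict (\<lambda>i. X i \<omega>) B) \<partial>M)
         = (\<integral>\<omega>. G (restrict (\<lambda>i. X i \<omega>) A) \<partial>M) * (\<integral>\<omega>. H (restrict (\<lambda>i. X i \<omega>) B) \<partial>M)"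
    by (rule indep_var_lebesgue_integral[OF ind' iG iH])
qed

lemma comp_meas:
  fixes g :: "(nat \<Rightarrow> real) \<times> real \<Rightarrow> real"
  assumes "g \<in> borel_measurable obsM" "i \<in> A"
  shows "(\<lambda>x. g (x i)) \<in> borel_measurable (PiM A (\<lambda>_. obsM))"
  using measurable_compose[OF measurable_component_singleton[OF assms(2)] assms(1)] by (simp add: comp_def)

lemma pair:
  fixes g h :: "(nat \<Rightarrow> real) \<times> real \<Rightarrow> real"
  assumes i: "i < n" and k: "k < n" and ik: "i \<noteq> k"
    and g: "g \<in> borel_measurable obsM" and h: "h \<in> borel_measurable obsM"
    and ig: "integrable D g" and ih: "integrable D h"
  shows "integrable M (\<lambda>\<omega>. g (X i \<omega>) * h (X k \<omega>))"
    and "(\<integral>\<omega>. g (X i \<omega>) * h (X k \<omega>) \<partial>M) = integral\<^sup>L D g * integral\<^sup>L D h"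
proof -
  note b = block[of "{i}" "{k}" "\<lambda>x. g (x i)" "\<lambda>x. h (x k)"]
  have 1: "integrable M (\<lambda>\<omega>. g (X i \<omega>))" "integrable M (\<lambda>\<omega>. h (X k \<omega>))"
    using int_single[OF g i] int_single[OF h k] ig ih by auto
  have prem: "{i} \<inter> {k} = {}" "{i} \<subseteq> {..<n}" "{k} \<subseteq> {..<n}"
    "(\<lambda>x. g (x i)) \<in> borel_measurable (PiM {i} (\<lambda>_. obsM))"
    "(\<lambda>x. h (x k)) \<in> borel_measurable (PiM {k} (\<lambda>_. obsM))"
    using i k ik by (auto intro!: comp_meas g h)
  show "integrable M (\<lambda>\<omega>. g (X i \<omega>) * h (X k \<omega>))"
    using b(1)[OF prem] 1 by simp
  show "(\<integral>\<omega>. g (X i \<omega>) * h (X k \<omega>) \<partial>M) = integral\<^sup>L D g * integral\<^sup>L D h"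
    using b(2)[OF prem] 1 int_single(2)[OF g i] int_single(2)[OF h k] by simp
qed


lemma sumsq:
  fixes g :: "(nat \<Rightarrow> real) \<times> real \<Rightarrow> real"
  assumes g: "g \<in> borel_measurable obsM" and g2: "integrable D (\<lambda>z. (g z)\<^sup>2)"
    and g0: "integral\<^sup>L D g = 0"
  shows "integrable M (\<lambda>\<omega>. (\<Sum>i<n. g (X i \<omega>))\<^sup>2)"
    and "(\<integral>\<omega>. (\<Sum>i<n. g (X i \<omega>))\<^sup>2 \<partial>M) = real n * (\<integral>z. (g z)\<^sup>2 \<partial>D)"
proof -
  have ig: "integrable D g" by (rule L2_int_D[OF g g2])
  have g2m: "(\<lambda>z. (g z)\<^sup>2) \<in> borel_measurable obsM" using g by measurable
  have trm: "integrable M (\<lambda>\<omega>. g (X i \<omega>) * g (X k \<omega>)) \<and>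
     (\<integral>\<omega>. g (X i \<omega>) * g (X k \<omega>) \<partial>M) = (if i = k then (\<integral>z. (g z)\<^sup>2 \<partial>D) else 0)"
    if i: "i < n" and k: "k < n" for i k
  proof (cases "i = k")
    case True
    then show ?thesis using int_single[OF g2m i] g2 by (simp add: power2_eq_square)
  next
    case False
    then show ?thesis using pair[OF i k False g g ig ig] g0 by simp
  qed
  have eq: "(\<lambda>\<omega>. (\<Sum>i<n. g (X i \<omega>))\<^sup>2) = (\<lambda>\<omega>. \<Sum>i<n. \<Sum>k<n. g (X i \<omega>) * g (X k \<omega>))"
    by (simp add: power2_eq_square sum_product)
  show "integrable M (\<lambda>\<omega>. (\<Sum>i<n. g (X i \<omega>))\<^sup>2)"
    unfolding eq
  proof (intro Bochner_Integration.integrable_sum)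
    fix i k assume "i \<in> {..<n}" "k \<in> {..<n}"
    then show "integrable M (\<lambda>\<omega>. g (X i \<omega>) * g (X k \<omega>))" using trm by auto
  qed
  have "(\<integral>\<omega>. (\<Sum>i<n. g (X i \<omega>))\<^sup>2 \<partial>M) = (\<Sum>i<n. \<Sum>k<n. \<integral>\<omega>. g (X i \<omega>) * g (X k \<omega>) \<partial>M)"
    unfolding eq using trm by (subst Bochner_Integration.integral_sum, fastforce, intro sum.cong refl, subst Bochner_Integration.integral_sum) auto
  also have "\<dots> = (\<Sum>i<n. \<Sum>k<n. (if i = k then (\<integral>z. (g z)\<^sup>2 \<partial>D) else 0))"
    using trm by (intro sum.cong refl) auto
  also have "\<dots> = real n * (\<integral>z. (g z)\<^sup>2 \<partial>D)" by simp
  finally show "(\<integral>\<omega>. (\<Sum>i<n. g (X i \<omega>))\<^sup>2 \<partial>M) = real n * (\<integral>z. (g z)\<^sup>2 \<partial>D)" .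
qed

end

lemma sum_delta2:
  fixes c :: real and n :: nat
  assumes "i < n" "k < n"
  shows "(\<Sum>i'<n. \<Sum>k'<n. if i' = i \<and> k' = k then c else 0) = c"
proof -
  have "(\<Sum>i'<n. \<Sum>k'<n. if i' = i \<and> k' = k then c else 0) = (\<Sum>i'<n. if i' = i then c else 0)"
    using assms by (intro sum.cong refl) (auto simp: sum.delta sum.delta' if_distrib cong: if_cong)
  also have "\<dots> = c" using assms by (simp add: sum.delta)
  finally show ?thesis .
qed

lemma int_sum4:
  fixes f :: "'i \<Rightarrow> 'j \<Rightarrow> 'k \<Rightarrow> 'l \<Rightarrow> 'b \<Rightarrow> real"
  assumes "\<And>a b c d. a \<in> A \<Longrightarrow> b \<in> B \<Longrightarrow> c \<in> C \<Longrightarrow> d \<in> E \<Longrightarrow> integrable M (f a b c d)"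
  shows "(\<integral>x. (\<Sum>a\<in>A. \<Sum>b\<in>B. \<Sum>c\<in>C. \<Sum>d\<in>E. f a b c d x) \<partial>M) =
     (\<Sum>a\<in>A. \<Sum>b\<in>B. \<Sum>c\<in>C. \<Sum>d\<in>E. integral\<^sup>L M (f a b c d))"
  using assms by (simp add: Bochner_Integration.integral_sum Bochner_Integration.integrable_sum)

lemma if_nonneg2: "0 \<le> (t::real) \<Longrightarrow> 0 \<le> (if P then t else 0) + (if Q then t else 0)"
  by simp

lemma if_ge1: "P \<Longrightarrow> 0 \<le> (t::real) \<Longrightarrow> t \<le> (if P then t else 0) + (if Q then t else 0)"
  by simp

lemma if_ge2: "Q \<Longrightarrow> 0 \<le> (t::real) \<Longrightarrow> t \<le> (if P then t else 0) + (if Q then t else 0)"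
  by simp

locale deg_setup = iid_setup +
  fixes J :: "nat set" and u v :: "nat \<Rightarrow> (nat \<Rightarrow> real) \<times> real \<Rightarrow> real"
  assumes J_fin: "finite J"
    and u_meas: "\<And>j. u j \<in> borel_measurable obsM"
    and v_meas: "\<And>j. v j \<in> borel_measurable obsM"
    and u_L2: "\<And>j. j \<in> J \<Longrightarrow> integrable D (\<lambda>z. (u j z)\<^sup>2)"
    and v_L2: "\<And>j. j \<in> J \<Longrightarrow> integrable D (\<lambda>z. (v j z)\<^sup>2)"
    and u_mean: "\<And>j. j \<in> J \<Longrightarrow> integral\<^sup>L D (u j) = 0"
    and v_mean: "\<And>j. j \<in> J \<Longrightarrow> integral\<^sup>L D (v j) = 0"
begin

definition Gf where "Gf x y = (\<Sum>j\<in>J. u j x * v j y)"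
definition tau where
  "tau = (\<Sum>j\<in>J. \<Sum>j'\<in>J. (\<integral>z. u j z * u j' z \<partial>D) * (\<integral>z. v j z * v j' z \<partial>D))"

lemma Gf_meas_Pi:
  assumes "i \<in> B" "k \<in> B"
  shows "(\<lambda>x. Gf (x i) (x k)) \<in> borel_measurable (PiM B (\<lambda>_. obsM))"
  unfolding Gf_def
  by (intro borel_measurable_sum borel_measurable_times comp_meas u_meas v_meas assms)

lemma Gf_meas:
  assumes "i < n" "k < n"
  shows "(\<lambda>\<omega>. Gf (X i \<omega>) (X k \<omega>)) \<in> borel_measurable M"
  unfolding Gf_def
  by (intro borel_measurable_sum borel_measurable_times meas_single u_meas v_meas assms)

lemma G2:
  assumes i: "i < n" and k: "k < n" and ik: "i \<noteq> k"
  shows "integrable M (\<lambda>\<omega>. (Gf (X i \<omega>) (X k \<omega>))\<^sup>2)"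
    and "(\<integral>\<omega>. (Gf (X i \<omega>) (X k \<omega>))\<^sup>2 \<partial>M) = tau"
proof -
  have eq: "(Gf a b)\<^sup>2 = (\<Sum>j\<in>J. \<Sum>j'\<in>J. (u j a * u j' a) * (v j b * v j' b))" for a b
    unfolding Gf_def power2_eq_square sum_product by (intro sum.cong refl) (simp add: ac_simps)
  have t: "integrable M (\<lambda>\<omega>. (u j (X i \<omega>) * u j' (X i \<omega>)) * (v j (X k \<omega>) * v j' (X k \<omega>))) \<and>
     (\<integral>\<omega>. (u j (X i \<omega>) * u j' (X i \<omega>)) * (v j (X k \<omega>) * v j' (X k \<omega>)) \<partial>M)
       = (\<integral>z. u j z * u j' z \<partial>D) * (\<integral>z. v j z * v j' z \<partial>D)"
    if "j \<in> J" "j' \<in> J" for j j'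
    using pair[OF i k ik, of "\<lambda>z. u j z * u j' z" "\<lambda>z. v j z * v j' z"]
      L2_prod_D[OF u_meas u_meas u_L2 u_L2] L2_prod_D[OF v_meas v_meas v_L2 v_L2] that
      u_meas v_meas by auto
  show "integrable M (\<lambda>\<omega>. (Gf (X i \<omega>) (X k \<omega>))\<^sup>2)"
    unfolding eq
  proof (intro Bochner_Integration.integrable_sum)
    fix j j' assume "j \<in> J" "j' \<in> J"
    then show "integrable M (\<lambda>\<omega>. (u j (X i \<omega>) * u j' (X i \<omega>)) * (v j (X k \<omega>) * v j' (X k \<omega>)))"
      using t by auto
  qed
  show "(\<integral>\<omega>. (Gf (X i \<omega>) (X k \<omega>))\<^sup>2 \<partial>M) = tau"
    unfolding eq tau_def using t
    by (subst Bochner_Integration.integral_sum, fastforce, intro sum.cong refl,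
        subst Bochner_Integration.integral_sum) auto
qed

lemma GG_int:
  assumes "i < n" "k < n" "i \<noteq> k" "i' < n" "k' < n" "i' \<noteq> k'"
  shows "integrable M (\<lambda>\<omega>. Gf (X i \<omega>) (X k \<omega>) * Gf (X i' \<omega>) (X k' \<omega>))"
  by (rule L2_prod_int[OF Gf_meas Gf_meas G2(1) G2(1)]) (use assms in auto)


lemma fresh_zero:
  fixes a c :: "nat \<Rightarrow> (nat \<Rightarrow> real) \<times> real \<Rightarrow> real"
  assumes a_meas: "\<And>j. a j \<in> borel_measurable obsM" and c_meas: "\<And>j. c j \<in> borel_measurable obsM"
    and a_L2: "\<And>j. j \<in> J \<Longrightarrow> integrable D (\<lambda>z. (a j z)\<^sup>2)"
    and c_L2: "\<And>j. j \<in> J \<Longrightarrow> integrable D (\<lambda>z. (c j z)\<^sup>2)"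
    and a_mean: "\<And>j. j \<in> J \<Longrightarrow> integral\<^sup>L D (a j) = 0"
    and idx: "m < n" "l < n" "i' < n" "k' < n" "i' \<noteq> k'" "m \<noteq> l" "m \<noteq> i'" "m \<noteq> k'"
  shows "(\<integral>\<omega>. (\<Sum>j\<in>J. a j (X m \<omega>) * c j (X l \<omega>)) * Gf (X i' \<omega>) (X k' \<omega>) \<partial>M) = 0"
proof -
  let ?B = "{l, i', k'}"
  have t: "integrable M (\<lambda>\<omega>. a j (X m \<omega>) * (c j (X l \<omega>) * Gf (X i' \<omega>) (X k' \<omega>))) \<and>
     (\<integral>\<omega>. a j (X m \<omega>) * (c j (X l \<omega>) * Gf (X i' \<omega>) (X k' \<omega>)) \<partial>M) = 0"
    if j: "j \<in> J" for j
  proof -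
    have c2: "integrable M (\<lambda>\<omega>. (c j (X l \<omega>))\<^sup>2)"
      using int_single[of "\<lambda>z. (c j z)\<^sup>2" l] c_L2[OF j] c_meas idx by auto
    have ia: "integrable M (\<lambda>\<omega>. a j (X m \<omega>))"
      using int_single[OF a_meas idx(1)] L2_int_D[OF a_meas a_L2[OF j]] by simp
    have ea: "(\<integral>\<omega>. a j (X m \<omega>) \<partial>M) = 0"
      using int_single(2)[OF a_meas idx(1)] a_mean[OF j] by simp
    have iH: "integrable M (\<lambda>\<omega>. c j (X l \<omega>) * Gf (X i' \<omega>) (X k' \<omega>))"
      by (rule L2_prod_int[OF meas_single[OF c_meas idx(2)] Gf_meas[OF idx(3,4)] c2 G2(1)[OF idx(3,4,5)]])
    have prem: "{m} \<inter> ?B = {}" "{m} \<subseteq> {..<n}" "?B \<subseteq> {..<n}"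
      "(\<lambda>x. a j (x m)) \<in> borel_measurable (PiM {m} (\<lambda>_. obsM))"
      "(\<lambda>x. c j (x l) * Gf (x i') (x k')) \<in> borel_measurable (PiM ?B (\<lambda>_. obsM))"
      using idx by (auto intro!: comp_meas a_meas c_meas borel_measurable_times Gf_meas_Pi)
    note b = block[OF prem]
    show ?thesis using b ia iH ea by simp
  qed
  have eq: "(\<lambda>\<omega>. (\<Sum>j\<in>J. a j (X m \<omega>) * c j (X l \<omega>)) * Gf (X i' \<omega>) (X k' \<omega>)) =
      (\<lambda>\<omega>. \<Sum>j\<in>J. a j (X m \<omega>) * (c j (X l \<omega>) * Gf (X i' \<omega>) (X k' \<omega>)))"
    by (simp add: sum_distrib_right mult.assoc)
  show ?thesis unfolding eq using t
    by (subst Bochner_Integration.integral_sum) auto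
qed

lemma Z1:
  assumes "i < n" "k < n" "i' < n" "k' < n" "i \<noteq> k" "i' \<noteq> k'" "i \<noteq> i'" "i \<noteq> k'"
  shows "(\<integral>\<omega>. Gf (X i \<omega>) (X k \<omega>) * Gf (X i' \<omega>) (X k' \<omega>) \<partial>M) = 0"
  using fresh_zero[OF u_meas v_meas u_L2 v_L2 u_mean, where m=i and l=k and i'=i' and k'=k'] assms
  unfolding Gf_def[of "X i _" "X k _"] by auto

lemma Z2:
  assumes "i < n" "k < n" "i' < n" "k' < n" "i \<noteq> k" "i' \<noteq> k'" "k \<noteq> i'" "k \<noteq> k'"
  shows "(\<integral>\<omega>. Gf (X i \<omega>) (X k \<omega>) * Gf (X i' \<omega>) (X k' \<omega>) \<partial>M) = 0"
proof -
  have "Gf (X i \<omega>) (X k \<omega>) = (\<Sum>j\<in>J. v j (X k \<omega>) * u j (X i \<omega>))" for \<omega>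
    unfolding Gf_def by (simp add: mult.commute)
  then show ?thesis
    using fresh_zero[OF v_meas u_meas v_L2 u_L2 v_mean, where m=k and l=i and i'=i' and k'=k'] assms by auto
qed

lemma tau_nonneg:
  assumes "2 \<le> n"
  shows "0 \<le> tau"
proof -
  have "0 \<le> (\<integral>\<omega>. (Gf (X 0 \<omega>) (X (Suc 0) \<omega>))\<^sup>2 \<partial>M)" by (intro integral_nonneg_AE) auto
  moreover have "(\<integral>\<omega>. (Gf (X 0 \<omega>) (X (Suc 0) \<omega>))\<^sup>2 \<partial>M) = tau" using G2(2)[of 0 "Suc 0"] assms by simp
  ultimately show ?thesis by simp
qed

definition Dsum where
  "Dsum \<omega> = (\<Sum>i<n. \<Sum>k<n. if i \<noteq> k then Gf (X i \<omega>) (X k \<omega>) else 0)"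

lemma Dbound:
  assumes n2: "2 \<le> n"
  shows "integrable M (\<lambda>\<omega>. (Dsum \<omega>)\<^sup>2)"
    and "(\<integral>\<omega>. (Dsum \<omega>)\<^sup>2 \<partial>M) \<le> 2 * (real n)\<^sup>2 * tau"
proof -
  define T where "T i k \<omega> = (if i \<noteq> k then Gf (X i \<omega>) (X k \<omega>) else 0)" for i k \<omega>
  have eq: "(\<lambda>\<omega>. (Dsum \<omega>)\<^sup>2) = (\<lambda>\<omega>. \<Sum>i'<n. \<Sum>k'<n. \<Sum>i<n. \<Sum>k<n. T i k \<omega> * T i' k' \<omega>)"
    unfolding Dsum_def T_def[symmetric] power2_eq_square
    by (simp add: sum_distrib_left sum_distrib_right)
  have iT: "integrable M (\<lambda>\<omega>. T i k \<omega> * T i' k' \<omega>)"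
    if "i < n" "k < n" "i' < n" "k' < n" for i k i' k'
    using GG_int[of i k i' k'] that unfolding T_def by (cases "i = k"; cases "i' = k'") auto
  show "integrable M (\<lambda>\<omega>. (Dsum \<omega>)\<^sup>2)"
    unfolding eq using iT by (auto intro!: Bochner_Integration.integrable_sum)
  show "(\<integral>\<omega>. (Dsum \<omega>)\<^sup>2 \<partial>M) \<le> 2 * (real n)\<^sup>2 * tau"
  proof -
    have tau0: "0 \<le> tau" by (rule tau_nonneg[OF n2])
    have bnd: "(\<integral>\<omega>. T i k \<omega> * T i' k' \<omega> \<partial>M) \<le>
        (if i = i' \<and> k = k' then tau else 0) + (if i = k' \<and> k = i' then tau else 0)"
      if idx: "i < n" "k < n" "i' < n" "k' < n" for i k i' k'
    proof (cases "i = k \<or> i' = k'")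
      case True
      have z: "T i k \<omega> * T i' k' \<omega> = 0" for \<omega>
      proof (cases "i = k")
        case True then show ?thesis by (simp add: T_def)
      next
        case False then have "i' = k'" using \<open>i = k \<or> i' = k'\<close> by blast
        then show ?thesis by (simp add: T_def)
      qed
      have "(\<integral>\<omega>. T i k \<omega> * T i' k' \<omega> \<partial>M) = 0" by (simp only: z integral_zero)
      then show ?thesis using if_nonneg2[OF tau0, of "i = i' \<and> k = k'" "i = k' \<and> k = i'"] by linarith
    next
      case False
      then have ne: "i \<noteq> k" "i' \<noteq> k'" by auto
      have TT: "T i k \<omega> * T i' k' \<omega> = Gf (X i \<omega>) (X k \<omega>) * Gf (X i' \<omega>) (X k' \<omega>)" for \<omega>
        using ne unfolding T_def by simp
      show ?thesis
      proof (cases "i = i' \<and> k = k'")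
        case True
        have "(\<integral>\<omega>. T i k \<omega> * T i' k' \<omega> \<partial>M) = (\<integral>\<omega>. (Gf (X i \<omega>) (X k \<omega>))\<^sup>2 \<partial>M)"
          unfolding TT using True by (simp add: power2_eq_square)
        also have "\<dots> = tau" by (rule G2(2)[OF idx(1,2) ne(1)])
        finally show ?thesis using if_ge1[OF True tau0, of "i = k' \<and> k = i'"] by linarith
      next
        case nq: False
        show ?thesis
        proof (cases "i = k' \<and> k = i'")
          case True
          have "(\<integral>\<omega>. Gf (X i \<omega>) (X k \<omega>) * Gf (X k \<omega>) (X i \<omega>) \<partial>M) \<le>
              (\<integral>\<omega>. ((Gf (X i \<omega>) (X k \<omega>))\<^sup>2 + (Gf (X k \<omega>) (X i \<omega>))\<^sup>2) / 2 \<partial>M)"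
          proof (rule integral_mono)
            show "integrable M (\<lambda>\<omega>. Gf (X i \<omega>) (X k \<omega>) * Gf (X k \<omega>) (X i \<omega>))"
              using GG_int[of i k k i] idx ne by auto
            show "integrable M (\<lambda>\<omega>. ((Gf (X i \<omega>) (X k \<omega>))\<^sup>2 + (Gf (X k \<omega>) (X i \<omega>))\<^sup>2) / 2)"
              using G2(1)[of i k] G2(1)[of k i] idx ne by auto
            fix \<omega>
            show "Gf (X i \<omega>) (X k \<omega>) * Gf (X k \<omega>) (X i \<omega>) \<le>
                ((Gf (X i \<omega>) (X k \<omega>))\<^sup>2 + (Gf (X k \<omega>) (X i \<omega>))\<^sup>2) / 2"
              using sum_squares_bound[of "Gf (X i \<omega>) (X k \<omega>)" "Gf (X k \<omega>) (X i \<omega>)"] by simp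
          qed
          also have "\<dots> = ((\<integral>\<omega>. (Gf (X i \<omega>) (X k \<omega>))\<^sup>2 \<partial>M) + (\<integral>\<omega>. (Gf (X k \<omega>) (X i \<omega>))\<^sup>2 \<partial>M)) / 2"
            by (subst integral_divide_zero, subst Bochner_Integration.integral_add)
               (use G2(1)[of i k] G2(1)[of k i] idx ne in auto)
          also have "\<dots> = tau"
            using G2(2)[of i k] G2(2)[of k i] idx ne by simp
          finally have "(\<integral>\<omega>. T i k \<omega> * T i' k' \<omega> \<partial>M) \<le> tau" unfolding TT using True by simp
          then show ?thesis using if_ge2[OF True tau0, of "i = i' \<and> k = k'"] by linarith
        next
          case nq2: False
          have "(\<integral>\<omega>. Gf (X i \<omega>) (X k \<omega>) * Gf (X i' \<omega>) (X k' \<omega>) \<partial>M) = 0"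
          proof (cases "i \<noteq> i' \<and> i \<noteq> k'")
            case True
            then show ?thesis using Z1[of i k i' k'] idx ne by blast
          next
            case False
            then have "k \<noteq> i' \<and> k \<noteq> k'" using nq nq2 ne by blast
            then show ?thesis using Z2[of i k i' k'] idx ne by blast
          qed
          then have "(\<integral>\<omega>. T i k \<omega> * T i' k' \<omega> \<partial>M) = 0" unfolding TT .
          then show ?thesis using if_nonneg2[OF tau0, of "i = i' \<and> k = k'" "i = k' \<and> k = i'"] by linarith
        qed
      qed
    qed
    have "(\<integral>\<omega>. (Dsum \<omega>)\<^sup>2 \<partial>M) = (\<Sum>i'<n. \<Sum>k'<n. \<Sum>i<n. \<Sum>k<n. \<integral>\<omega>. T i k \<omega> * T i' k' \<omega> \<partial>M)"
      unfolding eq using iT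
      by (rule int_sum4) (use iT in auto)
    also have "\<dots> \<le> (\<Sum>i'<n. \<Sum>k'<n. \<Sum>i<n. \<Sum>k<n.
        (if i = i' \<and> k = k' then tau else 0) + (if i = k' \<and> k = i' then tau else 0))"
      using bnd by (intro sum_mono) auto
    also have "\<dots> = (\<Sum>i'<n. \<Sum>k'<n. 2 * tau)"
    proof (intro sum.cong refl)
      fix i' k' assume a: "i' \<in> {..<n}" "k' \<in> {..<n}"
      then have a': "i' < n" "k' < n" by auto
      have "(\<Sum>i<n. \<Sum>k<n. (if i = i' \<and> k = k' then tau else 0) + (if i = k' \<and> k = i' then tau else 0))
        = (\<Sum>i<n. \<Sum>k<n. if i = i' \<and> k = k' then tau else 0) + (\<Sum>i<n. \<Sum>k<n. if i = k' \<and> k = i' then tau else 0)"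
        by (simp only: sum.distrib)
      also have "\<dots> = tau + tau" by (simp only: sum_delta2[OF a'(1,2)] sum_delta2[OF a'(2,1)])
      finally show "(\<Sum>i<n. \<Sum>k<n. (if i = i' \<and> k = k' then tau else 0) + (if i = k' \<and> k = i' then tau else 0)) = 2 * tau"
        by simp
    qed
    also have "\<dots> = 2 * (real n)\<^sup>2 * tau" by (simp add: power2_eq_square)
    finally show ?thesis .
  qed
qed

end

lemma var_le:
  fixes Y :: "'b \<Rightarrow> real"
  assumes P: "prob_space N" and Ym: "Y \<in> borel_measurable N" and Y2: "integrable N (\<lambda>z. (Y z)\<^sup>2)"
  shows "integrable N (\<lambda>z. (Y z - integral\<^sup>L N Y)\<^sup>2)"
    and "(\<integral>z. (Y z - integral\<^sup>L N Y)\<^sup>2 \<partial>N) \<le> (\<integral>z. (Y z)\<^sup>2 \<partial>N)"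
proof -
  interpret prob_space N by (rule P)
  have iY: "integrable N Y" by (rule square_integrable_imp_integrable[OF Ym Y2])
  let ?c = "integral\<^sup>L N Y"
  have eq: "(\<lambda>z. (Y z - ?c)\<^sup>2) = (\<lambda>z. (Y z)\<^sup>2 - 2 * ?c * Y z + ?c\<^sup>2)"
    by (simp add: power2_eq_square algebra_simps)
  show "integrable N (\<lambda>z. (Y z - integral\<^sup>L N Y)\<^sup>2)"
    unfolding eq using iY Y2 by auto
  have "(\<integral>z. (Y z - ?c)\<^sup>2 \<partial>N) = (\<integral>z. (Y z)\<^sup>2 \<partial>N) - 2 * ?c * ?c + ?c\<^sup>2"
    unfolding eq using iY Y2 prob_space by simp
  also have "\<dots> \<le> (\<integral>z. (Y z)\<^sup>2 \<partial>N)" by (simp add: power2_eq_square)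
  finally show "(\<integral>z. (Y z - integral\<^sup>L N Y)\<^sup>2 \<partial>N) \<le> (\<integral>z. (Y z)\<^sup>2 \<partial>N)" .
qed

lemma L2_sum_bound:
  fixes a b :: "'b \<Rightarrow> real"
  assumes "a \<in> borel_measurable N" "b \<in> borel_measurable N"
    "integrable N (\<lambda>z. (a z)\<^sup>2)" "integrable N (\<lambda>z. (b z)\<^sup>2)"
  shows "integrable N (\<lambda>z. (a z + b z)\<^sup>2)"
    and "(\<integral>z. (a z + b z)\<^sup>2 \<partial>N) \<le> 2 * (\<integral>z. (a z)\<^sup>2 \<partial>N) + 2 * (\<integral>z. (b z)\<^sup>2 \<partial>N)"
proof -
  have iab: "integrable N (\<lambda>z. a z * b z)" by (rule L2_prod_int[OF assms])
  have eq: "(\<lambda>z. (a z + b z)\<^sup>2) = (\<lambda>z. (a z)\<^sup>2 + 2 * (a z * b z) + (b z)\<^sup>2)"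
    by (simp add: power2_eq_square algebra_simps)
  show i: "integrable N (\<lambda>z. (a z + b z)\<^sup>2)" unfolding eq using iab assms by auto
  have "(\<integral>z. (a z + b z)\<^sup>2 \<partial>N) \<le> (\<integral>z. 2 * (a z)\<^sup>2 + 2 * (b z)\<^sup>2 \<partial>N)"
  proof (rule integral_mono[OF i])
    show "integrable N (\<lambda>z. 2 * (a z)\<^sup>2 + 2 * (b z)\<^sup>2)" using assms by auto
    fix z show "(a z + b z)\<^sup>2 \<le> 2 * (a z)\<^sup>2 + 2 * (b z)\<^sup>2"
      using sum_squares_bound[of "a z" "b z"] by (simp add: power2_eq_square algebra_simps)
  qed
  also have "\<dots> = 2 * (\<integral>z. (a z)\<^sup>2 \<partial>N) + 2 * (\<integral>z. (b z)\<^sup>2 \<partial>N)" using assms by simp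
  finally show "(\<integral>z. (a z + b z)\<^sup>2 \<partial>N) \<le> 2 * (\<integral>z. (a z)\<^sup>2 \<partial>N) + 2 * (\<integral>z. (b z)\<^sup>2 \<partial>N)" .
qed

lemma sq_sum_int:
  fixes g :: "'i \<Rightarrow> 'b \<Rightarrow> real"
  assumes fin: "finite J" and gm: "\<And>j. g j \<in> borel_measurable N"
    and g2: "\<And>j. j \<in> J \<Longrightarrow> integrable N (\<lambda>z. (g j z)\<^sup>2)"
  shows "integrable N (\<lambda>z. (\<Sum>j\<in>J. c j * g j z)\<^sup>2)"
    and "(\<integral>z. (\<Sum>j\<in>J. c j * g j z)\<^sup>2 \<partial>N) = (\<Sum>j\<in>J. \<Sum>k\<in>J. c j * c k * (\<integral>z. g j z * g k z \<partial>N))"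
proof -
  have ip: "integrable N (\<lambda>z. g j z * g k z)" if "j \<in> J" "k \<in> J" for j k
    using L2_prod_int[OF gm gm g2 g2] that by auto
  have eq: "(\<lambda>z. (\<Sum>j\<in>J. c j * g j z)\<^sup>2) = (\<lambda>z. \<Sum>j\<in>J. \<Sum>k\<in>J. c j * c k * (g j z * g k z))"
    by (simp add: power2_eq_square sum_product ac_simps)
  show "integrable N (\<lambda>z. (\<Sum>j\<in>J. c j * g j z)\<^sup>2)"
    unfolding eq using ip by (simp add: Bochner_Integration.integrable_sum)
  show "(\<integral>z. (\<Sum>j\<in>J. c j * g j z)\<^sup>2 \<partial>N) = (\<Sum>j\<in>J. \<Sum>k\<in>J. c j * c k * (\<integral>z. g j z * g k z \<partial>N))"
    unfolding eq using ip by (simp add: Bochner_Integration.integral_sum Bochner_Integration.integrable_sum)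
qed

lemma cov_eq:
  fixes g h :: "'b \<Rightarrow> real"
  assumes P: "prob_space N" and "g \<in> borel_measurable N" "h \<in> borel_measurable N"
    "integrable N (\<lambda>z. (g z)\<^sup>2)" "integrable N (\<lambda>z. (h z)\<^sup>2)"
  shows "(\<integral>z. (g z - integral\<^sup>L N g) * (h z - integral\<^sup>L N h) \<partial>N) = (\<integral>z. g z * h z \<partial>N) - integral\<^sup>L N g * integral\<^sup>L N h"
proof -
  interpret prob_space N by (rule P)
  have ig: "integrable N g" "integrable N h" using square_integrable_imp_integrable assms by auto
  have igh: "integrable N (\<lambda>z. g z * h z)" by (rule L2_prod_int[OF assms(2-5)])
  let ?a = "integral\<^sup>L N g" and ?b = "integral\<^sup>L N h"
  have eq: "(\<lambda>z. (g z - ?a) * (h z - ?b)) = (\<lambda>z. g z * h z - ?b * g z - ?a * h z + ?a * ?b)"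
    by (simp add: algebra_simps)
  show ?thesis unfolding eq using ig igh prob_space by simp
qed

lemma cs_double:
  fixes x y :: "nat \<Rightarrow> nat \<Rightarrow> real"
  shows "(\<Sum>j\<in>P. \<Sum>k\<in>P. x j k * y j k) \<le> sqrt (\<Sum>j\<in>P. \<Sum>k\<in>P. (x j k)\<^sup>2) * sqrt (\<Sum>j\<in>P. \<Sum>k\<in>P. (y j k)\<^sup>2)"
proof -
  have cs: "(\<Sum>q\<in>P \<times> P. x (fst q) (snd q) * y (fst q) (snd q))\<^sup>2 \<le>
     (\<Sum>q\<in>P \<times> P. (x (fst q) (snd q))\<^sup>2) * (\<Sum>q\<in>P \<times> P. (y (fst q) (snd q))\<^sup>2)"
    by (rule Cauchy_Schwarz_ineq_sum)
  have e: "\<And>h :: nat \<Rightarrow> nat \<Rightarrow> real. (\<Sum>q\<in>P \<times> P. h (fst q) (snd q)) = (\<Sum>j\<in>P. \<Sum>k\<in>P. h j k)"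
    by (simp add: sum.cartesian_product case_prod_beta)
  have cs': "(\<Sum>j\<in>P. \<Sum>k\<in>P. x j k * y j k)\<^sup>2 \<le> (\<Sum>j\<in>P. \<Sum>k\<in>P. (x j k)\<^sup>2) * (\<Sum>j\<in>P. \<Sum>k\<in>P. (y j k)\<^sup>2)"
    using cs by (simp only: e[of "\<lambda>j k. x j k * y j k"] e[of "\<lambda>j k. (x j k)\<^sup>2"] e[of "\<lambda>j k. (y j k)\<^sup>2"])
  have "(\<Sum>j\<in>P. \<Sum>k\<in>P. x j k * y j k) \<le> sqrt ((\<Sum>j\<in>P. \<Sum>k\<in>P. x j k * y j k)\<^sup>2)"
    by simp
  also have "\<dots> \<le> sqrt ((\<Sum>j\<in>P. \<Sum>k\<in>P. (x j k)\<^sup>2) * (\<Sum>j\<in>P. \<Sum>k\<in>P. (y j k)\<^sup>2))"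
    using cs' by (rule real_sqrt_le_mono)
  finally show ?thesis by (simp add: real_sqrt_mult)
qed

lemma sum_sq_prod:
  fixes t :: "nat \<Rightarrow> real"
  shows "(\<Sum>j\<in>P. \<Sum>k\<in>P. (t j * t k)\<^sup>2) = (\<Sum>j\<in>P. (t j)\<^sup>2)\<^sup>2"
  by (simp add: power2_eq_square sum_product ac_simps)

lemma cs_quad:
  fixes t :: "nat \<Rightarrow> real" and A :: "nat \<Rightarrow> nat \<Rightarrow> real"
  shows "(\<Sum>j\<in>P. \<Sum>k\<in>P. t j * t k * A j k) \<le> (\<Sum>j\<in>P. (t j)\<^sup>2) * sqrt (\<Sum>j\<in>P. \<Sum>k\<in>P. (A j k)\<^sup>2)"
proof -
  have "(\<Sum>j\<in>P. \<Sum>k\<in>P. t j * t k * A j k) \<le> sqrt (\<Sum>j\<in>P. \<Sum>k\<in>P. (t j * t k)\<^sup>2) * sqrt (\<Sum>j\<in>P. \<Sum>k\<in>P. (A j k)\<^sup>2)"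
    using cs_double[of "\<lambda>j k. t j * t k" "\<lambda>j k. A j k" P] by simp
  also have "sqrt (\<Sum>j\<in>P. \<Sum>k\<in>P. (t j * t k)\<^sup>2) = (\<Sum>j\<in>P. (t j)\<^sup>2)"
    unfolding sum_sq_prod by (simp add: sum_nonneg)
  finally show ?thesis .
qed

locale dlevel =
  fixes D :: "((nat \<Rightarrow> real) \<times> real) measure" and p :: nat and Th :: "nat set"
  assumes D_prob: "prob_space D"
    and D_sets: "sets D = sets obsM"
    and VarX: "\<And>j k. j \<in> {1..p} \<Longrightarrow> k \<in> {1..p} \<Longrightarrow>
               integrable D (\<lambda>z. fst z j * fst z k) \<and>
               (\<integral>z. fst z j * fst z k \<partial>D) = (if j = k then 1 else 0)"
    and fin_XX: "\<And>j k. j \<in> {1..p} \<Longrightarrow> k \<in> {1..p} \<Longrightarrow>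
               integrable D (\<lambda>z. (fst z j * fst z k)\<^sup>2)"
    and fin_W: "\<And>j. j \<in> {1..p} \<Longrightarrow> integrable D (\<lambda>z. (fst z j * snd z)\<^sup>2)"
    and fin_b: "\<And>j. j \<in> {1..p} \<Longrightarrow>
               integrable D (\<lambda>z. (fst z j * snd z * hS Th (fst z))\<^sup>2)"
    and Th_sub: "Th \<subseteq> {1..p}"
    and varf_nz: "popvar D (\<lambda>z. hS Th (fst z)) \<noteq> 0"
begin

definition wf where "wf j z = fst z j * snd z"
definition ff where "ff z = hS Th (fst z)"
definition bf where "bf j z = fst z j * snd z * hS Th (fst z)"
definition uf where "uf j z = wf j z - beta D j"
definition vf where "vf j z = bf j z - theta D Th j"
definition VV where "VV = popvar D (\<lambda>z. hS Th (fst z))"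
definition Af where "Af j k = (\<integral>z. (fst z j * snd z) * (fst z k * snd z) \<partial>D)"
definition Cf where "Cf j k = (\<integral>z. (fst z j * snd z) * (fst z k * snd z) * (hS Th (fst z))\<^sup>2 \<partial>D)"
definition Lf where "Lf z = (\<Sum>j\<in>{1..p}. theta D Th j * uf j z + beta D j * vf j z)"
definition tauD where "tauD = (\<Sum>j\<in>{1..p}. \<Sum>j'\<in>{1..p}. (\<integral>z. uf j z * uf j' z \<partial>D) * (\<integral>z. vf j z * vf j' z \<partial>D))"

lemma measD: "g \<in> borel_measurable obsM \<Longrightarrow> g \<in> borel_measurable D"
  for g :: "(nat \<Rightarrow> real) \<times> real \<Rightarrow> real"
  by (metis measurable_cong_sets[OF D_sets refl])

lemma wf_eta: "wf j = (\<lambda>z. fst z j * snd z)" by (rule ext) (simp add: wf_def)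

lemma meas_w[measurable]: "wf j \<in> borel_measurable obsM" unfolding wf_def by measurable
lemma meas_f[measurable]: "ff \<in> borel_measurable obsM" unfolding ff_def by measurable
lemma meas_b[measurable]: "bf j \<in> borel_measurable obsM" unfolding bf_def by measurable
lemma meas_u[measurable]: "uf j \<in> borel_measurable obsM" unfolding uf_def by measurable
lemma meas_v[measurable]: "vf j \<in> borel_measurable obsM" unfolding vf_def by measurable
lemma meas_L[measurable]: "Lf \<in> borel_measurable obsM" unfolding Lf_def by measurable

lemma w_L2: "j \<in> {1..p} \<Longrightarrow> integrable D (\<lambda>z. (wf j z)\<^sup>2)"
  using fin_W unfolding wf_def by simp
lemma b_L2: "j \<in> {1..p} \<Longrightarrow> integrable D (\<lambda>z. (bf j z)\<^sup>2)"
  using fin_b unfolding bf_def by simp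

lemma sqint: "g \<in> borel_measurable obsM \<Longrightarrow> integrable D (\<lambda>z. (g z)\<^sup>2) \<Longrightarrow> integrable D g"
  for g :: "(nat \<Rightarrow> real) \<times> real \<Rightarrow> real"
proof -
  interpret prob_space D by (rule D_prob)
  show "g \<in> borel_measurable obsM \<Longrightarrow> integrable D (\<lambda>z. (g z)\<^sup>2) \<Longrightarrow> integrable D g"
    using square_integrable_imp_integrable[OF measD] by blast
qed

lemma w_int: "j \<in> {1..p} \<Longrightarrow> integrable D (wf j)"
  by (rule sqint[OF meas_w w_L2])
lemma b_int: "j \<in> {1..p} \<Longrightarrow> integrable D (bf j)"
  by (rule sqint[OF meas_b b_L2])

lemma beta_eq: "beta D j = integral\<^sup>L D (wf j)"
  unfolding beta_def wf_def ..
lemma theta_eq: "theta D Th j = integral\<^sup>L D (bf j)"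
  unfolding theta_def bf_def ..

lemma centered_L2:
  fixes g :: "(nat \<Rightarrow> real) \<times> real \<Rightarrow> real"
  assumes "g \<in> borel_measurable obsM" "integrable D (\<lambda>z. (g z)\<^sup>2)"
  shows "integrable D (\<lambda>z. (g z - integral\<^sup>L D g)\<^sup>2)"
    and "integral\<^sup>L D (\<lambda>z. g z - integral\<^sup>L D g) = 0"
proof -
  have ig: "integrable D g" by (rule sqint[OF assms])
  show "integrable D (\<lambda>z. (g z - integral\<^sup>L D g)\<^sup>2)"
    by (rule var_le(1)[OF D_prob measD[OF assms(1)] assms(2)])
  show "integral\<^sup>L D (\<lambda>z. g z - integral\<^sup>L D g) = 0"
  proof -
    interpret prob_space D by (rule D_prob)
    show ?thesis using ig prob_space by simp
  qed
qed

lemma u_L2: "j \<in> {1..p} \<Longrightarrow> integrable D (\<lambda>z. (uf j z)\<^sup>2)"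
  unfolding uf_def beta_eq by (rule centered_L2(1)[OF meas_w w_L2])
lemma u_mean: "j \<in> {1..p} \<Longrightarrow> integral\<^sup>L D (uf j) = 0"
  unfolding uf_def beta_eq by (rule centered_L2(2)[OF meas_w w_L2])
lemma v_L2: "j \<in> {1..p} \<Longrightarrow> integrable D (\<lambda>z. (vf j z)\<^sup>2)"
  unfolding vf_def theta_eq by (rule centered_L2(1)[OF meas_b b_L2])
lemma v_mean: "j \<in> {1..p} \<Longrightarrow> integral\<^sup>L D (vf j) = 0"
  unfolding vf_def theta_eq by (rule centered_L2(2)[OF meas_b b_L2])


definition Qs where "Qs = {(j, j'). j \<in> Th \<and> j' \<in> Th \<and> j < j'}"

lemma Qs_sub: "Qs \<subseteq> {1..p} \<times> {1..p}" using Th_sub unfolding Qs_def by auto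
lemma Qs_fin: "finite Qs" by (rule finite_subset[OF Qs_sub]) auto

lemma ff_eq: "ff z = (\<Sum>q\<in>Qs. 1 * (fst z (fst q) * fst z (snd q)))"
  unfolding ff_def hS_def Qs_def by (simp add: case_prod_beta)

lemma f_L2: "integrable D (\<lambda>z. (ff z)\<^sup>2)"
proof -
  have "integrable D (\<lambda>z. (\<Sum>q\<in>Qs. 1 * (fst z (fst q) * fst z (snd q)))\<^sup>2)"
  proof (rule sq_sum_int(1)[OF Qs_fin])
    show "(\<lambda>z. fst z (fst q) * fst z (snd q)) \<in> borel_measurable D" for q
      by (intro measD) measurable
    show "integrable D (\<lambda>z. (fst z (fst q) * fst z (snd q))\<^sup>2)" if "q \<in> Qs" for q
      using fin_XX Qs_sub that by auto
  qed
  then show ?thesis unfolding ff_eq .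
qed

lemma f_mean: "integral\<^sup>L D ff = 0"
proof -
  have "integral\<^sup>L D ff = (\<Sum>q\<in>Qs. \<integral>z. fst z (fst q) * fst z (snd q) \<partial>D)"
    unfolding ff_eq using VarX Qs_sub by (subst Bochner_Integration.integral_sum) auto
  also have "\<dots> = 0"
  proof (intro sum.neutral ballI)
    fix q assume "q \<in> Qs"
    then obtain a b where q: "q = (a, b)" "a \<in> Th" "b \<in> Th" "a < b" unfolding Qs_def by auto
    then show "(\<integral>z. fst z (fst q) * fst z (snd q) \<partial>D) = 0"
    proof -
      have "a \<in> {1..p}" "b \<in> {1..p}" using q(2,3) Th_sub by auto
      then show ?thesis using VarX[of a b] q by auto
    qed
  qed
  finally show ?thesis .
qed

lemma V_eq: "VV = (\<integral>z. (ff z)\<^sup>2 \<partial>D)"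
  using f_mean unfolding VV_def popvar_def ff_def by simp

lemma V_pos: "0 < VV"
proof -
  have "0 \<le> VV" unfolding V_eq by (intro integral_nonneg_AE) auto
  moreover have "VV \<noteq> 0" using varf_nz unfolding VV_def .
  ultimately show ?thesis by simp
qed

definition Y1 where "Y1 z = (\<Sum>j\<in>{1..p}. theta D Th j * wf j z)"
definition Y2 where "Y2 z = (\<Sum>j\<in>{1..p}. beta D j * bf j z)"

lemma meas_Y[measurable]: "Y1 \<in> borel_measurable obsM" "Y2 \<in> borel_measurable obsM"
  unfolding Y1_def Y2_def by measurable

lemma Y1_sq: "integrable D (\<lambda>z. (Y1 z)\<^sup>2)"
  "(\<integral>z. (Y1 z)\<^sup>2 \<partial>D) = (\<Sum>j\<in>{1..p}. \<Sum>k\<in>{1..p}. theta D Th j * theta D Th k * Af j k)"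
  unfolding Y1_def Af_def
  using sq_sum_int[of "{1..p}" wf D "theta D Th", OF _ measD[OF meas_w] w_L2]
  by (simp_all add: wf_def)

lemma bb_eq: "(\<integral>z. bf j z * bf k z \<partial>D) = Cf j k"
  unfolding Cf_def bf_def by (simp add: power2_eq_square ac_simps)

lemma Y2_sq: "integrable D (\<lambda>z. (Y2 z)\<^sup>2)"
  "(\<integral>z. (Y2 z)\<^sup>2 \<partial>D) = (\<Sum>j\<in>{1..p}. \<Sum>k\<in>{1..p}. beta D j * beta D k * Cf j k)"
  unfolding Y2_def
  using sq_sum_int[of "{1..p}" bf D "beta D", OF _ measD[OF meas_b] b_L2]
  by (simp_all add: bb_eq)

lemma Y1_int: "integral\<^sup>L D Y1 = (\<Sum>j\<in>{1..p}. theta D Th j * beta D j)"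
  unfolding Y1_def beta_eq using w_int by (subst Bochner_Integration.integral_sum) auto

lemma Y2_int: "integral\<^sup>L D Y2 = (\<Sum>j\<in>{1..p}. beta D j * theta D Th j)"
  unfolding Y2_def theta_eq using b_int by (subst Bochner_Integration.integral_sum) auto

lemma Lf_eq: "Lf z = (Y1 z - integral\<^sup>L D Y1) + (Y2 z - integral\<^sup>L D Y2)"
  unfolding Lf_def Y1_int Y2_int Y1_def Y2_def uf_def vf_def
  by (simp add: sum.distrib sum_subtractf algebra_simps sum_distrib_left)

lemma L_L2: "integrable D (\<lambda>z. (Lf z)\<^sup>2)"
  and L_bound: "(\<integral>z. (Lf z)\<^sup>2 \<partial>D) \<le>
     2 * (\<Sum>j\<in>{1..p}. \<Sum>k\<in>{1..p}. theta D Th j * theta D Th k * Af j k)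
   + 2 * (\<Sum>j\<in>{1..p}. \<Sum>k\<in>{1..p}. beta D j * beta D k * Cf j k)"
proof -
  note v1 = var_le[OF D_prob measD[OF meas_Y(1)] Y1_sq(1)]
  note v2 = var_le[OF D_prob measD[OF meas_Y(2)] Y2_sq(1)]
  note s = L2_sum_bound[of "\<lambda>z. Y1 z - integral\<^sup>L D Y1" D "\<lambda>z. Y2 z - integral\<^sup>L D Y2", OF _ _ v1(1) v2(1)]
  have m: "(\<lambda>z. Y1 z - integral\<^sup>L D Y1) \<in> borel_measurable D" "(\<lambda>z. Y2 z - integral\<^sup>L D Y2) \<in> borel_measurable D"
    by (intro borel_measurable_diff measD[OF meas_Y(1)] measD[OF meas_Y(2)] borel_measurable_const)+
  show "integrable D (\<lambda>z. (Lf z)\<^sup>2)" unfolding Lf_eq using s(1)[OF m] .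
  show "(\<integral>z. (Lf z)\<^sup>2 \<partial>D) \<le>
     2 * (\<Sum>j\<in>{1..p}. \<Sum>k\<in>{1..p}. theta D Th j * theta D Th k * Af j k)
   + 2 * (\<Sum>j\<in>{1..p}. \<Sum>k\<in>{1..p}. beta D j * beta D k * Cf j k)"
    unfolding Lf_eq using s(2)[OF m] v1(2) v2(2) Y1_sq(2) Y2_sq(2) by linarith
qed

lemma L_mean: "integral\<^sup>L D Lf = 0"
proof -
  interpret prob_space D by (rule D_prob)
  have i: "integrable D Y1" "integrable D Y2"
    using sqint[OF meas_Y(1) Y1_sq(1)] sqint[OF meas_Y(2) Y2_sq(1)] by auto
  show ?thesis unfolding Lf_eq using i prob_space by simp
qed

lemma uu_eq: "j \<in> {1..p} \<Longrightarrow> k \<in> {1..p} \<Longrightarrow> (\<integral>z. uf j z * uf k z \<partial>D) = Af j k - beta D j * beta D k"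
  unfolding uf_def beta_eq
  using cov_eq[OF D_prob measD[OF meas_w] measD[OF meas_w] w_L2 w_L2, of j k]
  by (simp add: Af_def wf_eta)

lemma vv_eq: "j \<in> {1..p} \<Longrightarrow> k \<in> {1..p} \<Longrightarrow> (\<integral>z. vf j z * vf k z \<partial>D) = Cf j k - theta D Th j * theta D Th k"
  unfolding vf_def theta_eq
  using cov_eq[OF D_prob measD[OF meas_b] measD[OF meas_b] b_L2 b_L2, of j k]
  by (simp add: bb_eq)

lemma tau_bound: "tauD \<le> (\<Sum>j\<in>{1..p}. \<Sum>k\<in>{1..p}. Af j k * Cf j k) + (\<Sum>j\<in>{1..p}. beta D j * theta D Th j)\<^sup>2"
proof -
  let ?P = "{1..p}"
  have "tauD = (\<Sum>j\<in>?P. \<Sum>k\<in>?P. (Af j k - beta D j * beta D k) * (Cf j k - theta D Th j * theta D Th k))"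
    unfolding tauD_def by (intro sum.cong refl) (simp add: uu_eq vv_eq)
  also have "\<dots> = (\<Sum>j\<in>?P. \<Sum>k\<in>?P. Af j k * Cf j k)
      - (\<Sum>j\<in>?P. \<Sum>k\<in>?P. theta D Th j * theta D Th k * Af j k)
      - (\<Sum>j\<in>?P. \<Sum>k\<in>?P. beta D j * beta D k * Cf j k)
      + (\<Sum>j\<in>?P. \<Sum>k\<in>?P. (beta D j * theta D Th j) * (beta D k * theta D Th k))"
    by (simp add: sum.distrib sum_subtractf algebra_simps)
  also have "(\<Sum>j\<in>?P. \<Sum>k\<in>?P. (beta D j * theta D Th j) * (beta D k * theta D Th k)) = (\<Sum>j\<in>?P. beta D j * theta D Th j)\<^sup>2"
    by (simp add: power2_eq_square sum_product)
  finally have e: "tauD = (\<Sum>j\<in>?P. \<Sum>k\<in>?P. Af j k * Cf j k)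
      - (\<Sum>j\<in>?P. \<Sum>k\<in>?P. theta D Th j * theta D Th k * Af j k)
      - (\<Sum>j\<in>?P. \<Sum>k\<in>?P. beta D j * beta D k * Cf j k)
      + (\<Sum>j\<in>?P. beta D j * theta D Th j)\<^sup>2" .
  have n1: "0 \<le> (\<Sum>j\<in>?P. \<Sum>k\<in>?P. theta D Th j * theta D Th k * Af j k)"
    unfolding Y1_sq(2)[symmetric] by (intro integral_nonneg_AE) auto
  have n2: "0 \<le> (\<Sum>j\<in>?P. \<Sum>k\<in>?P. beta D j * beta D k * Cf j k)"
    unfolding Y2_sq(2)[symmetric] by (intro integral_nonneg_AE) auto
  show ?thesis using e n1 n2 by linarith
qed

end

lemma cnt1:
  fixes c :: real and n :: nat
  assumes "i < n"
  shows "(\<Sum>k<n. if i \<noteq> k then c else 0) = (real n - 1) * c"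
proof -
  have "(\<Sum>k<n. if i \<noteq> k then c else 0) = (\<Sum>k<n. c - (if i = k then c else 0))"
    by (intro sum.cong) auto
  also have "\<dots> = real n * c - c" using assms by (simp add: sum_subtractf)
  finally show ?thesis by (simp add: algebra_simps)
qed

lemma cnt2:
  fixes c :: real and n :: nat
  assumes "i < n"
  shows "(\<Sum>k<n. if k \<noteq> i then c else 0) = (real n - 1) * c"
  using cnt1[OF assms, of c] by (simp add: eq_commute)

lemma meas_if0: "f \<in> borel_measurable N \<Longrightarrow> (\<lambda>\<omega>. if c then f \<omega> else (0::real)) \<in> borel_measurable N"
  by (cases c) simp_all

lemma choose2_real: "real (n choose 2) = real n * (real n - 1) / 2"
proof (induction n)
  case 0 then show ?case by simp
next
  case (Suc n)
  have "Suc n choose 2 = (n choose 1) + (n choose 2)"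
    by (simp add: numeral_2_eq_2)
  then have "real (Suc n choose 2) = real n + real n * (real n - 1) / 2" using Suc by simp
  also have "\<dots> = real (Suc n) * (real (Suc n) - 1) / 2" by (simp add: field_simps power2_eq_square)
  finally show ?case .
qed

lemma amgm_aux:
  fixes s V m e z :: real
  assumes s: "0 < s" and V: "0 < V" and m: "0 < m"
  shows "\<bar>sqrt m * (- (e / V) * (z / m))\<bar> \<le> (s * e\<^sup>2 / V + z\<^sup>2 / (s * m * V)) / 2"
proof -
  define r where "r = sqrt m"
  have r: "0 < r" "m = r\<^sup>2" using m unfolding r_def by auto
  have lhs: "\<bar>sqrt m * (- (e / V) * (z / m))\<bar> = \<bar>e\<bar> * \<bar>z\<bar> / (V * r)"
    unfolding r_def[symmetric] using r V by (simp add: abs_mult power2_eq_square field_simps)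
  have key: "2 * (s * r * \<bar>e\<bar>) * \<bar>z\<bar> \<le> (s * r * \<bar>e\<bar>)\<^sup>2 + \<bar>z\<bar>\<^sup>2" by (rule sum_squares_bound)
  have "\<bar>e\<bar> * \<bar>z\<bar> / (V * r) = (2 * (s * r * \<bar>e\<bar>) * \<bar>z\<bar>) / (2 * s * r\<^sup>2 * V)"
    using r s V by (simp add: power2_eq_square field_simps)
  also have "\<dots> \<le> ((s * r * \<bar>e\<bar>)\<^sup>2 + \<bar>z\<bar>\<^sup>2) / (2 * s * r\<^sup>2 * V)"
    using key r s V by (intro divide_right_mono) auto
  also have "\<dots> = (s * e\<^sup>2 / V + z\<^sup>2 / (s * m * V)) / 2"
    using r s V by (simp add: power2_eq_square field_simps)
  finally show ?thesis using lhs by simp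
qed


locale main_setup = I: iid_setup M D X n + DL: dlevel D p Th
  for M :: "'a measure" and D X n p Th +
  assumes n2: "2 \<le> n"
begin

sublocale G: deg_setup M D X n "{1..p}" DL.uf DL.vf
  by unfold_locales (auto intro: DL.u_L2 DL.v_L2 DL.u_mean DL.v_mean)

lemma tau_eq: "G.tau = DL.tauD"
  unfolding G.tau_def DL.tauD_def ..

definition "Nn = real (n choose 2)"
definition "Lsum \<omega> = (\<Sum>i<n. DL.Lf (X i \<omega>))"
definition "Zsum \<omega> = (\<Sum>i<n. DL.ff (X i \<omega>))"
definition "E1 \<omega> = G.Dsum \<omega> / Nn + (2 / real n) * Lsum \<omega>"
definition "kap = (\<Sum>j\<in>{1..p}. beta D j * theta D Th j)"

lemma Nn_eq: "Nn = real n * (real n - 1) / 2" unfolding Nn_def by (rule choose2_real)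
lemma Nn_pos: "0 < Nn" unfolding Nn_eq using n2 by simp

lemma term_eq:
  "(\<Sum>j\<in>{1..p}. (fst x j * snd x) * (fst y j * snd y)) * hS Th (fst y)
   = G.Gf x y + (\<Sum>j\<in>{1..p}. theta D Th j * DL.uf j x) + (\<Sum>j\<in>{1..p}. beta D j * DL.vf j y) + kap"
proof -
  have "G.Gf x y + (\<Sum>j\<in>{1..p}. theta D Th j * DL.uf j x) + (\<Sum>j\<in>{1..p}. beta D j * DL.vf j y) + kap
     = (\<Sum>j\<in>{1..p}. DL.uf j x * DL.vf j y + theta D Th j * DL.uf j x + beta D j * DL.vf j y + beta D j * theta D Th j)"
    unfolding G.Gf_def kap_def by (simp add: sum.distrib)
  also have "\<dots> = (\<Sum>j\<in>{1..p}. (fst x j * snd x) * (fst y j * snd y) * hS Th (fst y))"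
    unfolding DL.uf_def DL.vf_def DL.wf_def DL.bf_def by (intro sum.cong refl) (simp add: algebra_simps)
  finally show ?thesis by (simp add: sum_distrib_right)
qed

lemma Nsum_eq:
  "(\<Sum>i1<n. \<Sum>i2<n. if i1 \<noteq> i2 then Wdot p (\<lambda>i. X i \<omega>) i1 i2 * hS Th (fst (X i2 \<omega>)) else 0)
   = G.Dsum \<omega> + (real n - 1) * Lsum \<omega> + real n * (real n - 1) * kap"
proof -
  define l1 where "l1 x = (\<Sum>j\<in>{1..p}. theta D Th j * DL.uf j x)" for x
  define l2 where "l2 y = (\<Sum>j\<in>{1..p}. beta D j * DL.vf j y)" for y
  have Lf: "DL.Lf z = l1 z + l2 z" for z unfolding DL.Lf_def l1_def l2_def by (simp add: sum.distrib)
  have "(\<Sum>i1<n. \<Sum>i2<n. if i1 \<noteq> i2 then Wdot p (\<lambda>i. X i \<omega>) i1 i2 * hS Th (fst (X i2 \<omega>)) else 0)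
    = (\<Sum>i1<n. \<Sum>i2<n. (if i1 \<noteq> i2 then G.Gf (X i1 \<omega>) (X i2 \<omega>) else 0)
        + (if i1 \<noteq> i2 then l1 (X i1 \<omega>) else 0) + (if i1 \<noteq> i2 then l2 (X i2 \<omega>) else 0)
        + (if i1 \<noteq> i2 then kap else 0))"
    unfolding Wdot_def using term_eq unfolding l1_def l2_def by (intro sum.cong refl) auto
  also have "\<dots> = G.Dsum \<omega> + (\<Sum>i1<n. \<Sum>i2<n. if i1 \<noteq> i2 then l1 (X i1 \<omega>) else 0)
      + (\<Sum>i1<n. \<Sum>i2<n. if i1 \<noteq> i2 then l2 (X i2 \<omega>) else 0)
      + (\<Sum>i1<n. \<Sum>i2<n. if i1 \<noteq> i2 then kap else 0)"
    unfolding G.Dsum_def by (simp only: sum.distrib)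
  also have "(\<Sum>i1<n. \<Sum>i2<n. if i1 \<noteq> i2 then l1 (X i1 \<omega>) else 0) = (\<Sum>i1<n. (real n - 1) * l1 (X i1 \<omega>))"
    by (intro sum.cong refl) (simp add: cnt1)
  also have "(\<Sum>i1<n. \<Sum>i2<n. if i1 \<noteq> i2 then l2 (X i2 \<omega>) else 0) = (\<Sum>i2<n. (real n - 1) * l2 (X i2 \<omega>))"
    by (subst sum.swap) (intro sum.cong refl, simp add: cnt2)
  also have "(\<Sum>i1<n. \<Sum>i2<n. if i1 \<noteq> i2 then kap else 0) = (\<Sum>i1<n. (real n - 1) * kap)"
    by (intro sum.cong refl) (simp add: cnt1)
  finally show ?thesis
    unfolding Lsum_def Lf by (simp add: sum.distrib sum_distrib_left algebra_simps)
qed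

lemma diff_eq:
  "Thatstat D p n Th (\<lambda>i. X i \<omega>) - Tstat D p n Th (\<lambda>i. X i \<omega>) = - (E1 \<omega> / DL.VV) * (Zsum \<omega> / real n)"
proof -
  have Z: "Zbar n (hS Th) (\<lambda>i. X i \<omega>) = Zsum \<omega> / real n"
    unfolding Zbar_def Zsum_def DL.ff_def by simp
  have ch: "chat D p n Th (\<lambda>i. X i \<omega>) = ((G.Dsum \<omega> + (real n - 1) * Lsum \<omega> + real n * (real n - 1) * kap) / Nn) / DL.VV"
    unfolding chat_def Nsum_eq DL.VV_def Nn_def by simp
  have cs: "cstar D p Th = 2 * kap / DL.VV"
    unfolding cstar_def kap_def DL.VV_def ..
  have "cstar D p Th - chat D p n Th (\<lambda>i. X i \<omega>) = - (E1 \<omega> / DL.VV)"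
    unfolding ch cs E1_def using Nn_pos DL.V_pos n2 unfolding Nn_eq
    by (simp add: field_simps)
  moreover have "Thatstat D p n Th (\<lambda>i. X i \<omega>) - Tstat D p n Th (\<lambda>i. X i \<omega>)
     = (cstar D p Th - chat D p n Th (\<lambda>i. X i \<omega>)) * Zbar n (hS Th) (\<lambda>i. X i \<omega>)"
    unfolding Thatstat_def Tstat_def by (simp add: algebra_simps)
  ultimately show ?thesis unfolding Z by simp
qed


lemma Dsum_meas: "G.Dsum \<in> borel_measurable M"
proof -
  have "(\<lambda>\<omega>. G.Dsum \<omega>) \<in> borel_measurable M"
    unfolding G.Dsum_def by (intro borel_measurable_sum meas_if0 G.Gf_meas) auto
  then show ?thesis by simp
qed

lemma Lsum_meas: "Lsum \<in> borel_measurable M"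
proof -
  have "(\<lambda>\<omega>. Lsum \<omega>) \<in> borel_measurable M"
    unfolding Lsum_def by (intro borel_measurable_sum I.meas_single DL.meas_L) auto
  then show ?thesis by simp
qed

lemma Zsum_meas: "Zsum \<in> borel_measurable M"
proof -
  have "(\<lambda>\<omega>. Zsum \<omega>) \<in> borel_measurable M"
    unfolding Zsum_def by (intro borel_measurable_sum I.meas_single DL.meas_f) auto
  then show ?thesis by simp
qed

lemma E1_meas: "E1 \<in> borel_measurable M"
proof -
  have "(\<lambda>\<omega>. E1 \<omega>) \<in> borel_measurable M"
    unfolding E1_def using Dsum_meas Lsum_meas by measurable
  then show ?thesis by simp
qed

lemma Zsum_sq: "integrable M (\<lambda>\<omega>. (Zsum \<omega>)\<^sup>2)" "(\<integral>\<omega>. (Zsum \<omega>)\<^sup>2 \<partial>M) = real n * DL.VV"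
  unfolding Zsum_def DL.V_eq using I.sumsq[OF DL.meas_f DL.f_L2 DL.f_mean] by auto

lemma E1_sq: "integrable M (\<lambda>\<omega>. (E1 \<omega>)\<^sup>2)"
  and E1_bound: "(\<integral>\<omega>. (E1 \<omega>)\<^sup>2 \<partial>M) \<le> 16 / (real n - 1)\<^sup>2 * DL.tauD + 8 / real n * (\<integral>z. (DL.Lf z)\<^sup>2 \<partial>D)"
proof -
  have ma: "(\<lambda>\<omega>. G.Dsum \<omega> / Nn) \<in> borel_measurable M" using Dsum_meas by measurable
  have mb: "(\<lambda>\<omega>. (2 / real n) * Lsum \<omega>) \<in> borel_measurable M" using Lsum_meas by measurable
  note DB = G.Dbound[OF n2]
  note LS = I.sumsq[OF DL.meas_L DL.L_L2 DL.L_mean]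
  have ea: "(\<lambda>\<omega>. (G.Dsum \<omega> / Nn)\<^sup>2) = (\<lambda>\<omega>. (G.Dsum \<omega>)\<^sup>2 / Nn\<^sup>2)"
    by (simp add: power_divide)
  have eb: "(\<lambda>\<omega>. ((2 / real n) * Lsum \<omega>)\<^sup>2) = (\<lambda>\<omega>. (2 / real n)\<^sup>2 * (\<Sum>i<n. DL.Lf (X i \<omega>))\<^sup>2)"
    unfolding Lsum_def by (rule ext) (simp only: power_mult_distrib)
  have ia: "integrable M (\<lambda>\<omega>. (G.Dsum \<omega> / Nn)\<^sup>2)" unfolding ea using DB(1) by simp
  have ib: "integrable M (\<lambda>\<omega>. ((2 / real n) * Lsum \<omega>)\<^sup>2)" unfolding eb using LS(1) by simp
  note sb = L2_sum_bound[OF ma mb ia ib]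
  show "integrable M (\<lambda>\<omega>. (E1 \<omega>)\<^sup>2)" unfolding E1_def using sb(1) .
  have va: "(\<integral>\<omega>. (G.Dsum \<omega> / Nn)\<^sup>2 \<partial>M) \<le> 8 / (real n - 1)\<^sup>2 * DL.tauD"
  proof -
    have "(\<integral>\<omega>. (G.Dsum \<omega> / Nn)\<^sup>2 \<partial>M) = (\<integral>\<omega>. (G.Dsum \<omega>)\<^sup>2 \<partial>M) / Nn\<^sup>2"
      unfolding ea by simp
    also have "\<dots> \<le> 2 * (real n)\<^sup>2 * G.tau / Nn\<^sup>2"
      using DB(2) Nn_pos by (intro divide_right_mono) auto
    also have "\<dots> = 8 / (real n - 1)\<^sup>2 * DL.tauD"
    proof -
      have a: "0 < (real n)\<^sup>2" "0 < (real n - 1)\<^sup>2" using n2 by auto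
      have e1: "Nn\<^sup>2 = (real n)\<^sup>2 * (real n - 1)\<^sup>2 / 4"
        unfolding Nn_eq by (simp add: power_divide power_mult_distrib)
      have e2: "\<And>a b t::real. 0 < a \<Longrightarrow> 0 < b \<Longrightarrow> 2 * a * t / (a * b / 4) = 8 / b * t"
        by (simp add: field_simps)
      show ?thesis unfolding tau_eq e1 using e2[OF a] by simp
    qed
    finally show ?thesis .
  qed
  have vb: "(\<integral>\<omega>. ((2 / real n) * Lsum \<omega>)\<^sup>2 \<partial>M) = 4 / real n * (\<integral>z. (DL.Lf z)\<^sup>2 \<partial>D)"
    unfolding eb using LS(2) n2 by (simp add: power2_eq_square field_simps)
  show "(\<integral>\<omega>. (E1 \<omega>)\<^sup>2 \<partial>M) \<le> 16 / (real n - 1)\<^sup>2 * DL.tauD + 8 / real n * (\<integral>z. (DL.Lf z)\<^sup>2 \<partial>D)"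
    unfolding E1_def using sb(2) va vb by linarith
qed

lemma markov_bound:
  assumes e: "0 < \<epsilon>" and s: "0 < s"
  shows "measure M {\<omega> \<in> space M. \<epsilon> < \<bar>sqrt (real n) * (Thatstat D p n Th (\<lambda>i. X i \<omega>) - Tstat D p n Th (\<lambda>i. X i \<omega>))\<bar>}
     \<le> (s * (\<integral>\<omega>. (E1 \<omega>)\<^sup>2 \<partial>M) / DL.VV + 1 / s) / (2 * \<epsilon>)"
proof -
  define uu where "uu \<omega> = (s * (E1 \<omega>)\<^sup>2 / DL.VV + (Zsum \<omega>)\<^sup>2 / (s * real n * DL.VV)) / 2" for \<omega>
  have V: "0 < DL.VV" by (rule DL.V_pos)
  have np: "0 < real n" using n2 by simp
  have um: "uu \<in> borel_measurable M"
  proof -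
    have "(\<lambda>\<omega>. uu \<omega>) \<in> borel_measurable M" unfolding uu_def using E1_meas Zsum_meas by measurable
    then show ?thesis by simp
  qed
  have ui: "integrable M uu" unfolding uu_def using E1_sq Zsum_sq(1) by simp
  have uint: "integral\<^sup>L M uu = (s * (\<integral>\<omega>. (E1 \<omega>)\<^sup>2 \<partial>M) / DL.VV + 1 / s) / 2"
    unfolding uu_def using E1_sq Zsum_sq V np s by (simp add: field_simps)
  have sub: "{\<omega> \<in> space M. \<epsilon> < \<bar>sqrt (real n) * (Thatstat D p n Th (\<lambda>i. X i \<omega>) - Tstat D p n Th (\<lambda>i. X i \<omega>))\<bar>}
      \<subseteq> {\<omega> \<in> space M. \<epsilon> \<le> uu \<omega>}"
  proof safe
    fix \<omega> assume "\<omega> \<in> space M" and lt: "\<epsilon> < \<bar>sqrt (real n) * (Thatstat D p n Th (\<lambda>i. X i \<omega>) - Tstat D p n Th (\<lambda>i. X i \<omega>))\<bar>"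
    have "\<bar>sqrt (real n) * (Thatstat D p n Th (\<lambda>i. X i \<omega>) - Tstat D p n Th (\<lambda>i. X i \<omega>))\<bar> \<le> uu \<omega>"
      unfolding diff_eq uu_def by (rule amgm_aux[OF s V np])
    then show "\<epsilon> \<le> uu \<omega>" using lt by simp
  qed
  have "measure M {\<omega> \<in> space M. \<epsilon> < \<bar>sqrt (real n) * (Thatstat D p n Th (\<lambda>i. X i \<omega>) - Tstat D p n Th (\<lambda>i. X i \<omega>))\<bar>}
      \<le> measure M {\<omega> \<in> space M. \<epsilon> \<le> uu \<omega>}"
    by (rule I.finite_measure_mono[OF sub]) (use um in measurable)
  also have "\<dots> \<le> integral\<^sup>L M uu / \<epsilon>"
    by (rule integral_Markov_inequality_measure[OF ui _ _ e, of "space M"])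
       (use s V np in \<open>auto simp: uu_def intro!: AE_I2 add_nonneg_nonneg divide_nonneg_pos mult_nonneg_nonneg mult_pos_pos\<close>)
  also have "\<dots> = (s * (\<integral>\<omega>. (E1 \<omega>)\<^sup>2 \<partial>M) / DL.VV + 1 / s) / (2 * \<epsilon>)"
    unfolding uint by simp
  finally show ?thesis .
qed


lemma q_bound:
  "(\<integral>\<omega>. (E1 \<omega>)\<^sup>2 \<partial>M) / DL.VV \<le>
    (16 / (real n - 1)\<^sup>2 * (sqrt (\<Sum>j\<in>{1..p}. \<Sum>k\<in>{1..p}. (DL.Af j k)\<^sup>2) * sqrt (\<Sum>j\<in>{1..p}. \<Sum>k\<in>{1..p}. (DL.Cf j k)\<^sup>2)
        + (\<Sum>j\<in>{1..p}. (beta D j)\<^sup>2) * (\<Sum>j\<in>{1..p}. (theta D Th j)\<^sup>2))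
     + 16 / real n * ((\<Sum>j\<in>{1..p}. (theta D Th j)\<^sup>2) * sqrt (\<Sum>j\<in>{1..p}. \<Sum>k\<in>{1..p}. (DL.Af j k)\<^sup>2)
        + (\<Sum>j\<in>{1..p}. (beta D j)\<^sup>2) * sqrt (\<Sum>j\<in>{1..p}. \<Sum>k\<in>{1..p}. (DL.Cf j k)\<^sup>2))) / DL.VV"
proof -
  let ?P = "{1..p}"
  let ?sA = "sqrt (\<Sum>j\<in>?P. \<Sum>k\<in>?P. (DL.Af j k)\<^sup>2)"
  let ?sC = "sqrt (\<Sum>j\<in>?P. \<Sum>k\<in>?P. (DL.Cf j k)\<^sup>2)"
  let ?B = "\<Sum>j\<in>?P. (beta D j)\<^sup>2"
  let ?T = "\<Sum>j\<in>?P. (theta D Th j)\<^sup>2"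
  have t1: "DL.tauD \<le> ?sA * ?sC + ?B * ?T"
  proof -
    have "(\<Sum>j\<in>?P. \<Sum>k\<in>?P. DL.Af j k * DL.Cf j k) \<le> ?sA * ?sC" by (rule cs_double)
    moreover have "(\<Sum>j\<in>?P. beta D j * theta D Th j)\<^sup>2 \<le> ?B * ?T" by (rule Cauchy_Schwarz_ineq_sum)
    ultimately show ?thesis using DL.tau_bound by linarith
  qed
  have t2: "(\<integral>z. (DL.Lf z)\<^sup>2 \<partial>D) \<le> 2 * (?T * ?sA) + 2 * (?B * ?sC)"
  proof -
    have "(\<Sum>j\<in>?P. \<Sum>k\<in>?P. theta D Th j * theta D Th k * DL.Af j k) \<le> ?T * ?sA" by (rule cs_quad)
    moreover have "(\<Sum>j\<in>?P. \<Sum>k\<in>?P. beta D j * beta D k * DL.Cf j k) \<le> ?B * ?sC" by (rule cs_quad)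
    ultimately show ?thesis using DL.L_bound by linarith
  qed
  have c1: "0 \<le> 16 / (real n - 1)\<^sup>2" by simp
  have c2: "0 \<le> 8 / real n" by simp
  have "(\<integral>\<omega>. (E1 \<omega>)\<^sup>2 \<partial>M) \<le> 16 / (real n - 1)\<^sup>2 * (?sA * ?sC + ?B * ?T) + 8 / real n * (2 * (?T * ?sA) + 2 * (?B * ?sC))"
    using E1_bound mult_left_mono[OF t1 c1] mult_left_mono[OF t2 c2] by linarith
  also have "8 / real n * (2 * (?T * ?sA) + 2 * (?B * ?sC)) = 16 / real n * (?T * ?sA + ?B * ?sC)"
    by (simp add: algebra_simps)
  finally have "(\<integral>\<omega>. (E1 \<omega>)\<^sup>2 \<partial>M) \<le> 16 / (real n - 1)\<^sup>2 * (?sA * ?sC + ?B * ?T) + 16 / real n * (?T * ?sA + ?B * ?sC)" .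
  then show ?thesis using DL.V_pos by (intro divide_right_mono) simp_all
qed

end

lemma final_alg:
  fixes n V SA SC B T Kb Kt :: real
  assumes n: "2 \<le> n" and V: "0 < V" and SA: "0 \<le> SA" and SC: "0 \<le> SC" and B: "0 \<le> B" "B \<le> Kb"
    and T: "0 \<le> T" "T / V \<le> Kt"
  shows "(16 / (n - 1)\<^sup>2 * (sqrt SA * sqrt SC + B * T) + 16 / n * (T * sqrt SA + B * sqrt SC)) / V
    \<le> 64 * sqrt (SA / n\<^sup>2) * sqrt (SC / (n * V)\<^sup>2) + 64 * Kb * Kt / n + 16 * Kt * sqrt (SA / n\<^sup>2) + 16 * Kb * sqrt (SC / (n * V)\<^sup>2)"
proof -
  have np: "0 < n" using n by simp
  define a where "a = sqrt SA / n"
  define c where "c = sqrt SC / (n * V)"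
  have a0: "0 \<le> a" and c0: "0 \<le> c" unfolding a_def c_def using SA SC np V by auto
  have ea: "sqrt (SA / n\<^sup>2) = a" unfolding a_def using np by (simp add: real_sqrt_divide)
  have ec: "sqrt (SC / (n * V)\<^sup>2) = c" unfolding c_def using np V by (simp add: real_sqrt_divide real_sqrt_mult)
  have sA: "sqrt SA = n * a" unfolding a_def using np by simp
  have sC: "sqrt SC = n * V * c" unfolding c_def using np V by simp
  have Kt0: "0 \<le> Kt" using T V by (meson divide_nonneg_pos order_trans)
  have r1: "n\<^sup>2 / (n - 1)\<^sup>2 \<le> 4"
  proof -
    have "0 \<le> (3 * n - 2) * (n - 2)" using n by (intro mult_nonneg_nonneg) auto
    moreover have "4 * (n - 1)\<^sup>2 - n\<^sup>2 = (3 * n - 2) * (n - 2)" by (simp add: power2_eq_square algebra_simps)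
    ultimately have "n\<^sup>2 \<le> 4 * (n - 1)\<^sup>2" by linarith
    moreover have "0 < (n - 1)\<^sup>2" using n by simp
    ultimately show ?thesis by (simp add: divide_le_eq)
  qed
  have r2: "16 / (n - 1)\<^sup>2 \<le> 64 / n"
  proof -
    have "0 \<le> (4 * n - 1) * (n - 2)" using n by (intro mult_nonneg_nonneg) auto
    moreover have "4 * (n - 1)\<^sup>2 - n = (4 * n - 1) * (n - 2) + 2" by (simp add: power2_eq_square algebra_simps)
    ultimately have "n \<le> 4 * (n - 1)\<^sup>2" by linarith
    moreover have "0 < (n - 1)\<^sup>2" using n by simp
    ultimately show ?thesis using np by (simp add: divide_simps)
  qed
  have LHS: "(16 / (n - 1)\<^sup>2 * (sqrt SA * sqrt SC + B * T) + 16 / n * (T * sqrt SA + B * sqrt SC)) / V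
     = 16 * (n\<^sup>2 / (n - 1)\<^sup>2) * (a * c) + 16 / (n - 1)\<^sup>2 * (B * (T / V)) + 16 * (T / V) * a + 16 * B * c"
  proof -
    have gen: "\<And>d. 0 < d \<Longrightarrow> (16 / d * (n * a * (n * V * c) + B * T) + 16 / n * (T * (n * a) + B * (n * V * c))) / V
      = 16 * (n\<^sup>2 / d) * (a * c) + 16 / d * (B * (T / V)) + 16 * (T / V) * a + 16 * B * c"
      using np V by (simp add: field_simps power2_eq_square)
    have "0 < (n - 1)\<^sup>2" using n by simp
    from gen[OF this] show ?thesis unfolding sA sC .
  qed
  have t1: "16 * (n\<^sup>2 / (n - 1)\<^sup>2) * (a * c) \<le> 64 * (a * c)"
    using mult_right_mono[OF r1, of "a * c"] a0 c0 by simp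
  have BT: "B * (T / V) \<le> Kb * Kt" using B T V Kt0 by (intro mult_mono) auto
  have BT0: "0 \<le> B * (T / V)" using B T V by simp
  have t2: "16 / (n - 1)\<^sup>2 * (B * (T / V)) \<le> 64 / n * (Kb * Kt)"
    using mult_mono[OF r2 BT] BT0 np by simp
  have t3: "16 * (T / V) * a \<le> 16 * Kt * a"
    using mult_right_mono[OF T(2) a0] by simp
  have t4: "16 * B * c \<le> 16 * Kb * c" using B c0 by (simp add: mult_right_mono)
  show ?thesis unfolding LHS ea ec using t1 t2 t3 t4 by (simp add: algebra_simps)
qed

context main_setup
begin

lemma diff_meas: "(\<lambda>\<omega>. sqrt (real n) * (Thatstat D p n Th (\<lambda>i. X i \<omega>) - Tstat D p n Th (\<lambda>i. X i \<omega>))) \<in> borel_measurable M"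
proof -
  have "(\<lambda>\<omega>. sqrt (real n) * (- (E1 \<omega> / DL.VV) * (Zsum \<omega> / real n))) \<in> borel_measurable M"
    using E1_meas Zsum_meas by measurable
  then show ?thesis by (simp only: diff_eq)
qed

end

theorem proposition4:
  fixes M :: "nat \<Rightarrow> 'a measure" and p :: "nat \<Rightarrow> nat"
    and D :: "nat \<Rightarrow> ((nat \<Rightarrow> real) \<times> real) measure"
    and Obs :: "nat \<Rightarrow> nat \<Rightarrow> 'a \<Rightarrow> (nat \<Rightarrow> real) \<times> real"
    and S :: "nat \<Rightarrow> 'a \<Rightarrow> nat set" and \<Theta> :: "nat \<Rightarrow> nat set"
  assumes prob: "\<And>n. prob_space (M n)"
    and D_prob: "\<And>n. prob_space (D n)"
    and D_sets: "\<And>n. sets (D n) = sets obsM"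
    and Obs_meas: "\<And>n i. i < n \<Longrightarrow> Obs n i \<in> measurable (M n) obsM"
    and Obs_indep: "\<And>n. prob_space.indep_vars (M n) (\<lambda>_. obsM) (Obs n) {..<n}"
    and Obs_distr: "\<And>n i. i < n \<Longrightarrow> distr (M n) obsM (Obs n i) = D n"
    and EX: "\<And>n j. j \<in> {1..p n} \<Longrightarrow>
               integrable (D n) (\<lambda>z. fst z j) \<and> (\<integral>z. fst z j \<partial>D n) = 0"
    and VarX: "\<And>n j k. j \<in> {1..p n} \<Longrightarrow> k \<in> {1..p n} \<Longrightarrow>
               integrable (D n) (\<lambda>z. fst z j * fst z k) \<and>
               (\<integral>z. fst z j * fst z k \<partial>D n) = (if j = k then 1 else 0)"
    and EY2: "\<And>n. integrable (D n) (\<lambda>z. (snd z)\<^sup>2)"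
    and fin_XX: "\<And>n j k. j \<in> {1..p n} \<Longrightarrow> k \<in> {1..p n} \<Longrightarrow>
               integrable (D n) (\<lambda>z. (fst z j * fst z k)\<^sup>2)"
    and fin_W: "\<And>n j. j \<in> {1..p n} \<Longrightarrow> integrable (D n) (\<lambda>z. (fst z j * snd z)\<^sup>2)"
    and fin_b: "\<And>n j. j \<in> {1..p n} \<Longrightarrow>
               integrable (D n) (\<lambda>z. (fst z j * snd z * hS (\<Theta> n) (fst z))\<^sup>2)"
    and S_sub: "\<And>n \<omega>. \<omega> \<in> space (M n) \<Longrightarrow> S n \<omega> \<subseteq> {1..p n}"
    and S_meas: "\<And>n Q. {\<omega> \<in> space (M n). S n \<omega> = Q} \<in> sets (M n)"
    and varh_nz: "\<And>n \<omega>. \<omega> \<in> space (M n) \<Longrightarrow> popvar (D n) (\<lambda>z. hS (S n \<omega>) (fst z)) \<noteq> 0"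
    and Theta_sub: "\<And>n. \<Theta> n \<subseteq> {1..p n}"
    and varf_nz: "\<And>n. popvar (D n) (\<lambda>z. hS (\<Theta> n) (fst z)) \<noteq> 0"
    and stable: "(\<lambda>n. real n * sqrt (measure (M n) {\<omega> \<in> space (M n). S n \<omega> \<noteq> \<Theta> n}))
                   \<longlonglongrightarrow> 0"
    and bnd_np: "Bseq (\<lambda>n. real n / real (p n))"
    and bnd_beta: "Bseq (\<lambda>n. \<Sum>j\<in>{1..p n}. (beta (D n) j)\<^sup>2)"
    and bnd_theta: "Bseq (\<lambda>n. (\<Sum>j\<in>{1..p n}. (theta (D n) (\<Theta> n) j)\<^sup>2)
                                / popvar (D n) (\<lambda>z. hS (\<Theta> n) (fst z)))"
    and bnd_b: "Bseq (\<lambda>n. (\<integral>z. (\<Sum>j\<in>{1..p n}. (fst z j * snd z * hS (\<Theta> n) (fst z))\<^sup>2) \<partial>D n)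
                           / (real n * popvar (D n) (\<lambda>z. hS (\<Theta> n) (fst z))))"
    and lim_A: "(\<lambda>n. (\<Sum>j\<in>{1..p n}. \<Sum>k\<in>{1..p n}.
                       (\<integral>z. (fst z j * snd z) * (fst z k * snd z) \<partial>D n)\<^sup>2) / (real n)\<^sup>2)
                 \<longlonglongrightarrow> 0"
    and lim_B: "(\<lambda>n. (\<Sum>j\<in>{1..p n}. \<Sum>k\<in>{1..p n}.
                       (\<integral>z. (fst z j * snd z) * (fst z k * snd z) * hS (\<Theta> n) (fst z) \<partial>D n)\<^sup>2)
                     / ((real n)\<^sup>2 * popvar (D n) (\<lambda>z. hS (\<Theta> n) (fst z))))
                 \<longlonglongrightarrow> 0"
    and lim_C: "(\<lambda>n. (\<Sum>j\<in>{1..p n}. \<Sum>k\<in>{1..p n}.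
                       (\<integral>z. (fst z j * snd z) * (fst z k * snd z) * (hS (\<Theta> n) (fst z))\<^sup>2 \<partial>D n)\<^sup>2)
                     / (real n * popvar (D n) (\<lambda>z. hS (\<Theta> n) (fst z)))\<^sup>2)
                 \<longlonglongrightarrow> 0"
    and mom_Th: "bounded_moments4 M (\<lambda>n \<omega>. Tstat (D n) (p n) n (S n \<omega>) (\<lambda>i. Obs n i \<omega>))"
    and mom_Thhat: "bounded_moments4 M (\<lambda>n \<omega>. Thatstat (D n) (p n) n (S n \<omega>) (\<lambda>i. Obs n i \<omega>))"
    and mom_Tf: "bounded_moments4 M (\<lambda>n \<omega>. Tstat (D n) (p n) n (\<Theta> n) (\<lambda>i. Obs n i \<omega>))"
    and mom_Tfhat: "bounded_moments4 M (\<lambda>n \<omega>. Thatstat (D n) (p n) n (\<Theta> n) (\<lambda>i. Obs n i \<omega>))"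
  shows "\<forall>\<epsilon>>0. (\<lambda>n. measure (M n) {\<omega> \<in> space (M n).
            \<epsilon> < \<bar>sqrt (real n) * (Thatstat (D n) (p n) n (S n \<omega>) (\<lambda>i. Obs n i \<omega>)
                                   - Tstat (D n) (p n) n (S n \<omega>) (\<lambda>i. Obs n i \<omega>))\<bar>})
          \<longlonglongrightarrow> 0"
proof (intro allI impI)
  fix \<epsilon> :: real assume e: "0 < \<epsilon>"
  define P where "P n = measure (M n) {\<omega> \<in> space (M n).
            \<epsilon> < \<bar>sqrt (real n) * (Thatstat (D n) (p n) n (S n \<omega>) (\<lambda>i. Obs n i \<omega>)
                                   - Tstat (D n) (p n) n (S n \<omega>) (\<lambda>i. Obs n i \<omega>))\<bar>}" for n
  define pp where "pp n = measure (M n) {\<omega> \<in> space (M n). S n \<omega> \<noteq> \<Theta> n}" for n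
  define V where "V n = popvar (D n) (\<lambda>z. hS (\<Theta> n) (fst z))" for n
  define SA where "SA n = (\<Sum>j\<in>{1..p n}. \<Sum>k\<in>{1..p n}.
                       (\<integral>z. (fst z j * snd z) * (fst z k * snd z) \<partial>D n)\<^sup>2)" for n
  define SC where "SC n = (\<Sum>j\<in>{1..p n}. \<Sum>k\<in>{1..p n}.
                       (\<integral>z. (fst z j * snd z) * (fst z k * snd z) * (hS (\<Theta> n) (fst z))\<^sup>2 \<partial>D n)\<^sup>2)" for n
  obtain Kb where Kb: "0 < Kb" "\<And>n. norm (\<Sum>j\<in>{1..p n}. (beta (D n) j)\<^sup>2) \<le> Kb"
    using bnd_beta by (auto elim: BseqE)
  obtain Kt where Kt: "0 < Kt" "\<And>n. norm ((\<Sum>j\<in>{1..p n}. (theta (D n) (\<Theta> n) j)\<^sup>2) / V n) \<le> Kt"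
    using bnd_theta unfolding V_def by (auto elim: BseqE)
  define r where "r n = 64 * sqrt (SA n / (real n)\<^sup>2) * sqrt (SC n / (real n * V n)\<^sup>2) + 64 * Kb * Kt / real n
     + 16 * Kt * sqrt (SA n / (real n)\<^sup>2) + 16 * Kb * sqrt (SC n / (real n * V n)\<^sup>2)" for n
  have key: "P n \<le> pp n + (s * r n + 1 / s) / (2 * \<epsilon>)" if n2: "2 \<le> n" and s: "0 < s" for n s
  proof -
    interpret main_setup "M n" "D n" "Obs n" n "p n" "\<Theta> n"
    proof (intro main_setup.intro iid_setup.intro dlevel.intro main_setup_axioms.intro iid_setup_axioms.intro)
      show "prob_space (M n)" by (rule prob)
      show "prob_space (D n)" by (rule D_prob)
      show "2 \<le> n" by (rule n2)
      show "\<Theta> n \<subseteq> {1..p n}" by (rule Theta_sub)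
    qed (simp_all add: Obs_meas Obs_indep Obs_distr D_prob D_sets VarX fin_XX fin_W fin_b varf_nz)
    let ?B = "{\<omega> \<in> space (M n). \<epsilon> < \<bar>sqrt (real n) * (Thatstat (D n) (p n) n (\<Theta> n) (\<lambda>i. Obs n i \<omega>)
                                   - Tstat (D n) (p n) n (\<Theta> n) (\<lambda>i. Obs n i \<omega>))\<bar>}"
    let ?A = "{\<omega> \<in> space (M n). S n \<omega> \<noteq> \<Theta> n}"
    have [measurable]: "(\<lambda>\<omega>. sqrt (real n) * (Thatstat (D n) (p n) n (\<Theta> n) (\<lambda>i. Obs n i \<omega>)
                                   - Tstat (D n) (p n) n (\<Theta> n) (\<lambda>i. Obs n i \<omega>))) \<in> borel_measurable (M n)"
      by (rule diff_meas)
    have Bm: "?B \<in> sets (M n)" by measurable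
    have Am: "?A \<in> sets (M n)"
    proof -
      have "?A = space (M n) - {\<omega> \<in> space (M n). S n \<omega> = \<Theta> n}" by auto
      then show ?thesis using S_meas[of n "\<Theta> n"] by auto
    qed
    have sub: "{\<omega> \<in> space (M n).
            \<epsilon> < \<bar>sqrt (real n) * (Thatstat (D n) (p n) n (S n \<omega>) (\<lambda>i. Obs n i \<omega>)
                                   - Tstat (D n) (p n) n (S n \<omega>) (\<lambda>i. Obs n i \<omega>))\<bar>} \<subseteq> ?A \<union> ?B"
    proof (intro subsetI)
      fix \<omega> assume "\<omega> \<in> {\<omega> \<in> space (M n).
            \<epsilon> < \<bar>sqrt (real n) * (Thatstat (D n) (p n) n (S n \<omega>) (\<lambda>i. Obs n i \<omega>)
                                   - Tstat (D n) (p n) n (S n \<omega>) (\<lambda>i. Obs n i \<omega>))\<bar>}"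
      then have w: "\<omega> \<in> space (M n)" and lt: "\<epsilon> < \<bar>sqrt (real n) * (Thatstat (D n) (p n) n (S n \<omega>) (\<lambda>i. Obs n i \<omega>)
                                   - Tstat (D n) (p n) n (S n \<omega>) (\<lambda>i. Obs n i \<omega>))\<bar>" by auto
      show "\<omega> \<in> ?A \<union> ?B"
      proof (cases "S n \<omega> = \<Theta> n")
        case True
        then have "\<omega> \<in> ?B" using w lt by simp
        then show ?thesis by blast
      next
        case False
        then have "\<omega> \<in> ?A" using w by simp
        then show ?thesis by blast
      qed
    qed
    have "P n \<le> measure (M n) (?A \<union> ?B)"
      unfolding P_def by (rule I.finite_measure_mono[OF sub]) (use Am Bm in auto)
    also have "\<dots> \<le> pp n + measure (M n) ?B"
      unfolding pp_def by (rule measure_Un_le[OF Am Bm])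
    also have "measure (M n) ?B \<le> (s * (\<integral>\<omega>. (E1 \<omega>)\<^sup>2 \<partial>M n) / DL.VV + 1 / s) / (2 * \<epsilon>)"
      by (rule markov_bound[OF e s])
    also have "(\<integral>\<omega>. (E1 \<omega>)\<^sup>2 \<partial>M n) / DL.VV \<le> r n"
    proof -
      note qb = q_bound
      have fa: "(16 / (real n - 1)\<^sup>2 * (sqrt (SA n) * sqrt (SC n) + (\<Sum>j\<in>{1..p n}. (beta (D n) j)\<^sup>2) * (\<Sum>j\<in>{1..p n}. (theta (D n) (\<Theta> n) j)\<^sup>2))
          + 16 / real n * ((\<Sum>j\<in>{1..p n}. (theta (D n) (\<Theta> n) j)\<^sup>2) * sqrt (SA n) + (\<Sum>j\<in>{1..p n}. (beta (D n) j)\<^sup>2) * sqrt (SC n))) / V n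
          \<le> r n"
        unfolding r_def
      proof (rule final_alg)
        show "2 \<le> real n" using n2 by simp
        show "0 < V n" using DL.V_pos unfolding V_def DL.VV_def .
        show "0 \<le> SA n" "0 \<le> SC n" unfolding SA_def SC_def by (auto intro!: sum_nonneg)
        show "0 \<le> (\<Sum>j\<in>{1..p n}. (beta (D n) j)\<^sup>2)" "0 \<le> (\<Sum>j\<in>{1..p n}. (theta (D n) (\<Theta> n) j)\<^sup>2)"
          by (auto intro!: sum_nonneg)
        show "(\<Sum>j\<in>{1..p n}. (beta (D n) j)\<^sup>2) \<le> Kb"
          by (metis Kb(2) real_norm_def abs_ge_self order_trans)
        show "(\<Sum>j\<in>{1..p n}. (theta (D n) (\<Theta> n) j)\<^sup>2) / V n \<le> Kt"
          by (metis Kt(2) real_norm_def abs_ge_self order_trans)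
      qed
      show ?thesis using qb fa unfolding SA_def SC_def V_def DL.VV_def DL.Af_def DL.Cf_def by linarith
    qed
    then have "s * ((\<integral>\<omega>. (E1 \<omega>)\<^sup>2 \<partial>M n) / DL.VV) \<le> s * r n"
      using s by (intro mult_left_mono) auto
    then have "(s * (\<integral>\<omega>. (E1 \<omega>)\<^sup>2 \<partial>M n) / DL.VV + 1 / s) / (2 * \<epsilon>) \<le> (s * r n + 1 / s) / (2 * \<epsilon>)"
      using e by (intro divide_right_mono add_right_mono) (auto simp: mult.assoc)
    finally show ?thesis by simp
  qed
  have pp0: "pp \<longlonglongrightarrow> 0"
  proof -
    have st: "(\<lambda>n. real n * sqrt (pp n)) \<longlonglongrightarrow> 0" using stable unfolding pp_def .
    have "(\<lambda>n. sqrt (pp n)) \<longlonglongrightarrow> 0"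
    proof (rule Lim_null_comparison[OF _ st])
      show "\<forall>\<^sub>F n in sequentially. norm (sqrt (pp n)) \<le> real n * sqrt (pp n)"
        using eventually_ge_at_top[of "1::nat"]
      proof (rule eventually_mono)
        fix n :: nat assume "1 \<le> n"
        moreover have "0 \<le> sqrt (pp n)" unfolding pp_def by simp
        ultimately show "norm (sqrt (pp n)) \<le> real n * sqrt (pp n)"
          using mult_right_mono[of 1 "real n" "sqrt (pp n)"] by simp
      qed
    qed
    then have "(\<lambda>n. (sqrt (pp n))\<^sup>2) \<longlonglongrightarrow> 0\<^sup>2" by (rule tendsto_power)
    moreover have "(sqrt (pp n))\<^sup>2 = pp n" for n unfolding pp_def by simp
    ultimately show ?thesis by simp
  qed
  have a0: "(\<lambda>n. sqrt (SA n / (real n)\<^sup>2)) \<longlonglongrightarrow> 0"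
    using tendsto_real_sqrt[OF lim_A] unfolding SA_def by simp
  have c0: "(\<lambda>n. sqrt (SC n / (real n * V n)\<^sup>2)) \<longlonglongrightarrow> 0"
    using tendsto_real_sqrt[OF lim_C] unfolding SC_def V_def by simp
  have r0: "r \<longlonglongrightarrow> 0"
  proof -
    have req: "r = (\<lambda>n. 64 * sqrt (SA n / (real n)\<^sup>2) * sqrt (SC n / (real n * V n)\<^sup>2) + (64 * Kb * Kt) * (1 / real n)
     + 16 * Kt * sqrt (SA n / (real n)\<^sup>2) + 16 * Kb * sqrt (SC n / (real n * V n)\<^sup>2))"
      unfolding r_def by (rule ext) simp
    have "(\<lambda>n. 64 * sqrt (SA n / (real n)\<^sup>2) * sqrt (SC n / (real n * V n)\<^sup>2) + (64 * Kb * Kt) * (1 / real n)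
     + 16 * Kt * sqrt (SA n / (real n)\<^sup>2) + 16 * Kb * sqrt (SC n / (real n * V n)\<^sup>2)) \<longlonglongrightarrow>
      64 * 0 * 0 + (64 * Kb * Kt) * 0 + 16 * Kt * 0 + 16 * Kb * 0"
      by (intro tendsto_add tendsto_mult tendsto_const a0 c0 lim_1_over_n)
    then show ?thesis unfolding req by simp
  qed
  show "P \<longlonglongrightarrow> 0"
  proof (rule order_tendstoI)
    fix a :: real assume "a < 0"
    moreover have "0 \<le> P n" for n unfolding P_def by simp
    ultimately show "\<forall>\<^sub>F n in sequentially. a < P n" by (intro always_eventually) (meson le_less_trans not_le)
  next
    fix \<eta> :: real assume eta: "0 < \<eta>"
    define s where "s = 2 / (\<epsilon> * \<eta>)"
    have s: "0 < s" unfolding s_def using e eta by simp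
    have ev1: "\<forall>\<^sub>F n in sequentially. pp n < \<eta> / 4" by (rule order_tendstoD(2)[OF pp0]) (use eta in simp)
    have ev2: "\<forall>\<^sub>F n in sequentially. r n < \<eta> * \<epsilon> / (2 * s)"
      by (rule order_tendstoD(2)[OF r0]) (use eta e s in simp)
    have ev3: "\<forall>\<^sub>F n in sequentially. 2 \<le> n" by (rule eventually_ge_at_top)
    show "\<forall>\<^sub>F n in sequentially. P n < \<eta>"
      using ev1 ev2 ev3
    proof (eventually_elim)
      case (elim n)
      have k: "P n \<le> pp n + (s * r n + 1 / s) / (2 * \<epsilon>)" by (rule key[OF elim(3) s])
      have "s * r n < s * (\<eta> * \<epsilon> / (2 * s))" using elim(2) s by (rule mult_strict_left_mono)
      also have "\<dots> = \<eta> * \<epsilon> / 2" using s by simp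
      finally have sr: "s * r n < \<eta> * \<epsilon> / 2" .
      have inv_s: "1 / s = \<eta> * \<epsilon> / 2" unfolding s_def by simp
      have "s * r n + 1 / s < \<eta> * \<epsilon>" using sr inv_s by linarith
      then have "(s * r n + 1 / s) / (2 * \<epsilon>) < (\<eta> * \<epsilon>) / (2 * \<epsilon>)"
        using e by (intro divide_strict_right_mono) auto
      also have "\<dots> = \<eta> / 2" using e by simp
      finally show "P n < \<eta>" using k elim(1) eta by linarith
    qed
  qed
qed

end
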